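(* Let $\mathcal{C}$ be a Frobenius category and $f:M\to N$ a morphism in $\mathcal{C}$. Then: (1) $f$ is a $0$-Ext-phantom morphism if and only if $f$ factors through a projective object of $\mathcal{C}$; (2) $f$ is a $0$-Ext-invertible morphism if and only if there exist projective objects $P,Q$ of $\mathcal{C}$ and morphisms $g_1:Q\to N$, $l:M\to P$, $g_2:Q\to P$ such that the morphism $M\oplus Q\to N\oplus P$ given by the matrix $\begin{pmatrix} f & g_1\\ l & g_2\end{pmatrix}$ is an isomorphism in $\mathcal{C}$.
   Context: Let $\mathcal{A}$ be an abelian category and $\mathcal{C}$ an extension-closed full additive subcategory of $\mathcal{A}$, viewed as an exact category whose conflations are the short exact sequences of $\mathcal{A}$ with all terms in $\mathcal{C}$; $\operatorname{Ext}^i_{\mathcal{C}}$ is Yoneda Ext in $\mathcal{C}$. $\mathcal{C}$ is a Frobenius category if it has enough projectives and enough injectives and the projective objects coincide with the injective objects. A morphism $f:M\to N$ is $0$-Ext-phantom if the natural transformation $\operatorname{Ext}^1_{\mathcal{C}}(-,f):\operatorname{Ext}^1_{\mathcal{C}}(-,M)\to\operatorname{Ext}^1_{\mathcal{C}}(-,N)$ is zero, and $0$-Ext-invertible if it is a natural isomorphism. *)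

theory Defs
  imports Main
begin

text \<open>A (preadditive) category given by its object set, hom-sets,
composition (cmp g f = g after f), identities, and the abelian group
structure on hom-sets (addition, negation, zero morphisms).\<close>

record ('o, 'm) cat =
  Ob  :: "'o set"
  Hom :: "'o \<Rightarrow> 'o \<Rightarrow> 'm set"
  cmp :: "'m \<Rightarrow> 'm \<Rightarrow> 'm"
  idm :: "'o \<Rightarrow> 'm"
  add :: "'m \<Rightarrow> 'm \<Rightarrow> 'm"
  neg :: "'m \<Rightarrow> 'm"
  zr  :: "'o \<Rightarrow> 'o \<Rightarrow> 'm"

definition category :: "('o, 'm) cat \<Rightarrow> bool" where
  "category A \<longleftrightarrow>
     (\<forall>X\<in>Ob A. idm A X \<in> Hom A X X) \<and>
     (\<forall>X\<in>Ob A. \<forall>Y\<in>Ob A. \<forall>Z\<in>Ob A. \<forall>f\<in>Hom A X Y. \<forall>g\<in>Hom A Y Z.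
        cmp A g f \<in> Hom A X Z) \<and>
     (\<forall>X\<in>Ob A. \<forall>Y\<in>Ob A. \<forall>f\<in>Hom A X Y.
        cmp A (idm A Y) f = f \<and> cmp A f (idm A X) = f) \<and>
     (\<forall>W\<in>Ob A. \<forall>X\<in>Ob A. \<forall>Y\<in>Ob A. \<forall>Z\<in>Ob A.
        \<forall>f\<in>Hom A W X. \<forall>g\<in>Hom A X Y. \<forall>h\<in>Hom A Y Z.
        cmp A h (cmp A g f) = cmp A (cmp A h g) f)"

definition preadditive :: "('o, 'm) cat \<Rightarrow> bool" where
  "preadditive A \<longleftrightarrow> category A \<and>
     (\<forall>X\<in>Ob A. \<forall>Y\<in>Ob A.
        zr A X Y \<in> Hom A X Y \<and>
        (\<forall>f\<in>Hom A X Y. \<forall>g\<in>Hom A X Y. add A f g \<in> Hom A X Y) \<and>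
        (\<forall>f\<in>Hom A X Y. neg A f \<in> Hom A X Y) \<and>
        (\<forall>f\<in>Hom A X Y. \<forall>g\<in>Hom A X Y. \<forall>h\<in>Hom A X Y.
           add A (add A f g) h = add A f (add A g h)) \<and>
        (\<forall>f\<in>Hom A X Y. \<forall>g\<in>Hom A X Y. add A f g = add A g f) \<and>
        (\<forall>f\<in>Hom A X Y. add A f (zr A X Y) = f) \<and>
        (\<forall>f\<in>Hom A X Y. add A f (neg A f) = zr A X Y)) \<and>
     (\<forall>X\<in>Ob A. \<forall>Y\<in>Ob A. \<forall>Z\<in>Ob A.
        (\<forall>f\<in>Hom A X Y. \<forall>g\<in>Hom A Y Z. \<forall>g'\<in>Hom A Y Z.
           cmp A (add A g g') f = add A (cmp A g f) (cmp A g' f)) \<and>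
        (\<forall>f\<in>Hom A X Y. \<forall>f'\<in>Hom A X Y. \<forall>g\<in>Hom A Y Z.
           cmp A g (add A f f') = add A (cmp A g f) (cmp A g f')))"

definition is_zero_obj :: "('o, 'm) cat \<Rightarrow> 'o \<Rightarrow> bool" where
  "is_zero_obj A Z \<longleftrightarrow> Z \<in> Ob A \<and>
     (\<forall>X\<in>Ob A. (\<exists>!f. f \<in> Hom A Z X) \<and> (\<exists>!f. f \<in> Hom A X Z))"

definition is_biproduct ::
  "('o, 'm) cat \<Rightarrow> 'o \<Rightarrow> 'o \<Rightarrow> 'o \<Rightarrow> 'm \<Rightarrow> 'm \<Rightarrow> 'm \<Rightarrow> 'm \<Rightarrow> bool" where
  "is_biproduct A X Y S i1 i2 p1 p2 \<longleftrightarrow>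
     X \<in> Ob A \<and> Y \<in> Ob A \<and> S \<in> Ob A \<and>
     i1 \<in> Hom A X S \<and> i2 \<in> Hom A Y S \<and> p1 \<in> Hom A S X \<and> p2 \<in> Hom A S Y \<and>
     cmp A p1 i1 = idm A X \<and> cmp A p2 i2 = idm A Y \<and>
     cmp A p1 i2 = zr A Y X \<and> cmp A p2 i1 = zr A X Y \<and>
     add A (cmp A i1 p1) (cmp A i2 p2) = idm A S"

definition is_mono :: "('o, 'm) cat \<Rightarrow> 'o \<Rightarrow> 'o \<Rightarrow> 'm \<Rightarrow> bool" where
  "is_mono A X Y f \<longleftrightarrow> f \<in> Hom A X Y \<and>
     (\<forall>Z\<in>Ob A. \<forall>g\<in>Hom A Z X. \<forall>h\<in>Hom A Z X. cmp A f g = cmp A f h \<longrightarrow> g = h)"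

definition is_epi :: "('o, 'm) cat \<Rightarrow> 'o \<Rightarrow> 'o \<Rightarrow> 'm \<Rightarrow> bool" where
  "is_epi A X Y f \<longleftrightarrow> f \<in> Hom A X Y \<and>
     (\<forall>Z\<in>Ob A. \<forall>g\<in>Hom A Y Z. \<forall>h\<in>Hom A Y Z. cmp A g f = cmp A h f \<longrightarrow> g = h)"

definition is_kernel :: "('o, 'm) cat \<Rightarrow> 'o \<Rightarrow> 'o \<Rightarrow> 'o \<Rightarrow> 'm \<Rightarrow> 'm \<Rightarrow> bool" where
  "is_kernel A K X Y k f \<longleftrightarrow>
     K \<in> Ob A \<and> X \<in> Ob A \<and> Y \<in> Ob A \<and> k \<in> Hom A K X \<and> f \<in> Hom A X Y \<and>
     cmp A f k = zr A K Y \<and>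
     (\<forall>Z\<in>Ob A. \<forall>g\<in>Hom A Z X. cmp A f g = zr A Z Y \<longrightarrow>
        (\<exists>!h. h \<in> Hom A Z K \<and> cmp A k h = g))"

definition is_cokernel :: "('o, 'm) cat \<Rightarrow> 'o \<Rightarrow> 'o \<Rightarrow> 'o \<Rightarrow> 'm \<Rightarrow> 'm \<Rightarrow> bool" where
  "is_cokernel A X Y Q f q \<longleftrightarrow>
     X \<in> Ob A \<and> Y \<in> Ob A \<and> Q \<in> Ob A \<and> f \<in> Hom A X Y \<and> q \<in> Hom A Y Q \<and>
     cmp A q f = zr A X Q \<and>
     (\<forall>Z\<in>Ob A. \<forall>g\<in>Hom A Y Z. cmp A g f = zr A X Z \<longrightarrow>
        (\<exists>!h. h \<in> Hom A Q Z \<and> cmp A h q = g))"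

definition abelian :: "('o, 'm) cat \<Rightarrow> bool" where
  "abelian A \<longleftrightarrow> preadditive A \<and>
     (\<exists>Z. is_zero_obj A Z) \<and>
     (\<forall>X\<in>Ob A. \<forall>Y\<in>Ob A. \<exists>S i1 i2 p1 p2. is_biproduct A X Y S i1 i2 p1 p2) \<and>
     (\<forall>X\<in>Ob A. \<forall>Y\<in>Ob A. \<forall>f\<in>Hom A X Y.
        (\<exists>K k. is_kernel A K X Y k f) \<and> (\<exists>Q q. is_cokernel A X Y Q f q)) \<and>
     (\<forall>X\<in>Ob A. \<forall>Y\<in>Ob A. \<forall>f. is_mono A X Y f \<longrightarrow>
        (\<exists>Z g. is_kernel A X Y Z f g)) \<and>
     (\<forall>X\<in>Ob A. \<forall>Y\<in>Ob A. \<forall>f. is_epi A X Y f \<longrightarrow>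
        (\<exists>Z g. is_cokernel A Z X Y g f))"

definition is_iso :: "('o, 'm) cat \<Rightarrow> 'o \<Rightarrow> 'o \<Rightarrow> 'm \<Rightarrow> bool" where
  "is_iso A X Y f \<longleftrightarrow> f \<in> Hom A X Y \<and>
     (\<exists>g\<in>Hom A Y X. cmp A g f = idm A X \<and> cmp A f g = idm A Y)"

definition short_exact :: "('o, 'm) cat \<Rightarrow> 'o \<Rightarrow> 'o \<Rightarrow> 'o \<Rightarrow> 'm \<Rightarrow> 'm \<Rightarrow> bool" where
  "short_exact A X E Y i p \<longleftrightarrow> is_kernel A X E Y i p \<and> is_cokernel A X E Y i p"

text \<open>C is an extension-closed full additive subcategory of A (given by its
object set; fullness: the hom-sets are those of A).  Containing a zero object
together with extension-closedness gives closure under isomorphisms and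
finite direct sums.\<close>
definition ext_closed_additive :: "('o, 'm) cat \<Rightarrow> 'o set \<Rightarrow> bool" where
  "ext_closed_additive A C \<longleftrightarrow> C \<subseteq> Ob A \<and>
     (\<exists>Z\<in>C. is_zero_obj A Z) \<and>
     (\<forall>X E Y i p. short_exact A X E Y i p \<and> X \<in> C \<and> Y \<in> C \<longrightarrow> E \<in> C)"

definition conflation :: "('o, 'm) cat \<Rightarrow> 'o set \<Rightarrow> 'o \<Rightarrow> 'o \<Rightarrow> 'o \<Rightarrow> 'm \<Rightarrow> 'm \<Rightarrow> bool" where
  "conflation A C X E Y i p \<longleftrightarrow> short_exact A X E Y i p \<and> X \<in> C \<and> E \<in> C \<and> Y \<in> C"

definition proj_obj :: "('o, 'm) cat \<Rightarrow> 'o set \<Rightarrow> 'o \<Rightarrow> bool" where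
  "proj_obj A C P \<longleftrightarrow> P \<in> C \<and>
     (\<forall>X E Y i p g. conflation A C X E Y i p \<and> g \<in> Hom A P Y \<longrightarrow>
        (\<exists>h\<in>Hom A P E. cmp A p h = g))"

definition inj_obj :: "('o, 'm) cat \<Rightarrow> 'o set \<Rightarrow> 'o \<Rightarrow> bool" where
  "inj_obj A C I \<longleftrightarrow> I \<in> C \<and>
     (\<forall>X E Y i p g. conflation A C X E Y i p \<and> g \<in> Hom A X I \<longrightarrow>
        (\<exists>h\<in>Hom A E I. cmp A h i = g))"

definition frobenius :: "('o, 'm) cat \<Rightarrow> 'o set \<Rightarrow> bool" where
  "frobenius A C \<longleftrightarrow>
     (\<forall>X\<in>C. \<exists>K P i p. conflation A C K P X i p \<and> proj_obj A C P) \<and>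
     (\<forall>X\<in>C. \<exists>I Y i p. conflation A C X I Y i p \<and> inj_obj A C I) \<and>
     (\<forall>P. proj_obj A C P \<longleftrightarrow> inj_obj A C P)"

definition yoneda_equiv ::
  "('o, 'm) cat \<Rightarrow> 'o \<Rightarrow> 'o \<Rightarrow> 'm \<Rightarrow> 'm \<Rightarrow> 'o \<Rightarrow> 'm \<Rightarrow> 'm \<Rightarrow> bool" where
  "yoneda_equiv A E Y i p E' i' p' \<longleftrightarrow>
     (\<exists>\<phi>\<in>Hom A E E'. cmp A \<phi> i = i' \<and> cmp A p' \<phi> = p)"

text \<open>The class of the conflation N \<rightarrow> E' \<rightarrow> X is the image of the class of
M \<rightarrow> E \<rightarrow> X under Ext^1(X,f) (i.e. is the pushout f_* of it) iff there is a
morphism of conflations (f, \<phi>, id_X) from the first to the second.\<close>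
definition ext_push ::
  "('o, 'm) cat \<Rightarrow> 'm \<Rightarrow> 'o \<Rightarrow> 'm \<Rightarrow> 'm \<Rightarrow> 'o \<Rightarrow> 'm \<Rightarrow> 'm \<Rightarrow> bool" where
  "ext_push A f E i p E' i' p' \<longleftrightarrow>
     (\<exists>\<phi>\<in>Hom A E E'. cmp A \<phi> i = cmp A i' f \<and> cmp A p' \<phi> = p)"

text \<open>The zero element of Ext^1(X,N) is the class of split conflations.\<close>
definition split_conf :: "('o, 'm) cat \<Rightarrow> 'o \<Rightarrow> 'o \<Rightarrow> 'm \<Rightarrow> bool" where
  "split_conf A E X p \<longleftrightarrow> (\<exists>s\<in>Hom A X E. cmp A p s = idm A X)"

text \<open>Ext^1_C(-,f) is zero: every component sends every class to zero.\<close>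
definition ext_phantom0 :: "('o, 'm) cat \<Rightarrow> 'o set \<Rightarrow> 'o \<Rightarrow> 'o \<Rightarrow> 'm \<Rightarrow> bool" where
  "ext_phantom0 A C M N f \<longleftrightarrow>
     (\<forall>X\<in>C. \<forall>E i p E' i' p'.
        conflation A C M E X i p \<and> conflation A C N E' X i' p' \<and>
        ext_push A f E i p E' i' p' \<longrightarrow> split_conf A E' X p')"

text \<open>Ext^1_C(-,f) is a natural isomorphism: every component
Ext^1_C(X,M) \<rightarrow> Ext^1_C(X,N) is bijective (on Yoneda classes).\<close>
definition ext_invertible0 :: "('o, 'm) cat \<Rightarrow> 'o set \<Rightarrow> 'o \<Rightarrow> 'o \<Rightarrow> 'm \<Rightarrow> bool" where
  "ext_invertible0 A C M N f \<longleftrightarrow>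
     (\<forall>X\<in>C.
        (\<forall>E' i' p'. conflation A C N E' X i' p' \<longrightarrow>
           (\<exists>E i p. conflation A C M E X i p \<and> ext_push A f E i p E' i' p')) \<and>
        (\<forall>E1 i1 p1 E2 i2 p2 F1 j1 q1 F2 j2 q2.
           conflation A C M E1 X i1 p1 \<and> conflation A C M E2 X i2 p2 \<and>
           conflation A C N F1 X j1 q1 \<and> conflation A C N F2 X j2 q2 \<and>
           ext_push A f E1 i1 p1 F1 j1 q1 \<and> ext_push A f E2 i2 p2 F2 j2 q2 \<and>
           yoneda_equiv A F1 X j1 q1 F2 j2 q2 \<longrightarrow>
           yoneda_equiv A E1 X i1 p1 E2 i2 p2))"

definition factors_through_proj :: "('o, 'm) cat \<Rightarrow> 'o set \<Rightarrow> 'o \<Rightarrow> 'o \<Rightarrow> 'm \<Rightarrow> bool" where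
  "factors_through_proj A C M N f \<longleftrightarrow>
     (\<exists>P a b. proj_obj A C P \<and> a \<in> Hom A M P \<and> b \<in> Hom A P N \<and> f = cmp A b a)"

end

theory Submission
  imports Defs
begin

locale abcat =
  fixes A :: "('o, 'm) cat"
  assumes ab: "abelian A"
begin

abbreviation cc (infixr "\<cdot>" 75) where "g \<cdot> f \<equiv> cmp A g f"
abbreviation ad (infixl "\<oplus>" 65) where "f \<oplus> g \<equiv> add A f g"
abbreviation sb (infixl "\<ominus>" 65) where "f \<ominus> g \<equiv> add A f (neg A g)"
abbreviation H where "H \<equiv> Hom A"
abbreviation Zr where "Zr \<equiv> zr A"
abbreviation I where "I \<equiv> idm A"

lemma pre: "preadditive A" using ab unfolding abelian_def by blast
lemma cat: "category A" using pre unfolding preadditive_def by blast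

lemma comp_h[intro,simp]: "f \<in> H X Y \<Longrightarrow> g \<in> H Y W \<Longrightarrow> X \<in> Ob A \<Longrightarrow> Y \<in> Ob A \<Longrightarrow> W \<in> Ob A \<Longrightarrow> g \<cdot> f \<in> H X W"
  using cat unfolding category_def by blast
lemma id_h[intro,simp]: "X \<in> Ob A \<Longrightarrow> I X \<in> H X X"
  using cat unfolding category_def by blast
lemma idl[simp]: "f \<in> H X Y \<Longrightarrow> X \<in> Ob A \<Longrightarrow> Y \<in> Ob A \<Longrightarrow> I Y \<cdot> f = f"
  using cat unfolding category_def by blast
lemma idr[simp]: "f \<in> H X Y \<Longrightarrow> X \<in> Ob A \<Longrightarrow> Y \<in> Ob A \<Longrightarrow> f \<cdot> I X = f"
  using cat unfolding category_def by blast
lemma assoc: "f \<in> H W X \<Longrightarrow> g \<in> H X Y \<Longrightarrow> h \<in> H Y V \<Longrightarrow> W \<in> Ob A \<Longrightarrow> X \<in> Ob A \<Longrightarrow> Y \<in> Ob A \<Longrightarrow> V \<in> Ob A \<Longrightarrow>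
   h \<cdot> (g \<cdot> f) = (h \<cdot> g) \<cdot> f"
  using cat unfolding category_def by blast

lemma zr_h[intro,simp]: "X \<in> Ob A \<Longrightarrow> Y \<in> Ob A \<Longrightarrow> Zr X Y \<in> H X Y"
  using pre unfolding preadditive_def by blast
lemma add_h[intro,simp]: "f \<in> H X Y \<Longrightarrow> g \<in> H X Y \<Longrightarrow> X \<in> Ob A \<Longrightarrow> Y \<in> Ob A \<Longrightarrow> f \<oplus> g \<in> H X Y"
  using pre unfolding preadditive_def by blast
lemma neg_h[intro,simp]: "f \<in> H X Y \<Longrightarrow> X \<in> Ob A \<Longrightarrow> Y \<in> Ob A \<Longrightarrow> neg A f \<in> H X Y"
  using pre unfolding preadditive_def by blast
lemma add_assoc: "f \<in> H X Y \<Longrightarrow> g \<in> H X Y \<Longrightarrow> h \<in> H X Y \<Longrightarrow> X \<in> Ob A \<Longrightarrow> Y \<in> Ob A \<Longrightarrow> f \<oplus> g \<oplus> h = f \<oplus> (g \<oplus> h)"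
  using pre unfolding preadditive_def by blast
lemma add_comm: "f \<in> H X Y \<Longrightarrow> g \<in> H X Y \<Longrightarrow> X \<in> Ob A \<Longrightarrow> Y \<in> Ob A \<Longrightarrow> f \<oplus> g = g \<oplus> f"
  using pre unfolding preadditive_def by blast
lemma add_zr[simp]: "f \<in> H X Y \<Longrightarrow> X \<in> Ob A \<Longrightarrow> Y \<in> Ob A \<Longrightarrow> f \<oplus> Zr X Y = f"
  using pre unfolding preadditive_def by blast
lemma add_neg[simp]: "f \<in> H X Y \<Longrightarrow> X \<in> Ob A \<Longrightarrow> Y \<in> Ob A \<Longrightarrow> f \<ominus> f = Zr X Y"
  using pre unfolding preadditive_def by blast
lemma distl: "f \<in> H X Y \<Longrightarrow> g \<in> H Y W \<Longrightarrow> g' \<in> H Y W \<Longrightarrow> X \<in> Ob A \<Longrightarrow> Y \<in> Ob A \<Longrightarrow> W \<in> Ob A \<Longrightarrow> (g \<oplus> g') \<cdot> f = g \<cdot> f \<oplus> g' \<cdot> f"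
  using pre unfolding preadditive_def Ball_def by metis
lemma distr: "f \<in> H X Y \<Longrightarrow> f' \<in> H X Y \<Longrightarrow> g \<in> H Y W \<Longrightarrow> X \<in> Ob A \<Longrightarrow> Y \<in> Ob A \<Longrightarrow> W \<in> Ob A \<Longrightarrow> g \<cdot> (f \<oplus> f') = g \<cdot> f \<oplus> g \<cdot> f'"
  using pre unfolding preadditive_def Ball_def by metis

lemma zr_add[simp]: "f \<in> H X Y \<Longrightarrow> X \<in> Ob A \<Longrightarrow> Y \<in> Ob A \<Longrightarrow> Zr X Y \<oplus> f = f"
  using add_comm[of "Zr X Y" X Y f] by simp

lemma neg_add_self[simp]: "f \<in> H X Y \<Longrightarrow> X \<in> Ob A \<Longrightarrow> Y \<in> Ob A \<Longrightarrow> neg A f \<oplus> f = Zr X Y"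
  using add_comm[of "neg A f" X Y f] by simp

lemma add_cancel: assumes "f \<in> H X Y" "g \<in> H X Y" "h \<in> H X Y" "X \<in> Ob A" "Y \<in> Ob A"
  and "f \<oplus> g = f \<oplus> h" shows "g = h"
proof -
  have "neg A f \<oplus> (f \<oplus> g) = neg A f \<oplus> (f \<oplus> h)" using assms by simp
  then have "(neg A f \<oplus> f) \<oplus> g = (neg A f \<oplus> f) \<oplus> h"
    using add_assoc[of "neg A f" X Y f g] add_assoc[of "neg A f" X Y f h] assms by simp
  then show ?thesis using assms by simp
qed

lemma neg_unique: assumes "f \<in> H X Y" "g \<in> H X Y" "X \<in> Ob A" "Y \<in> Ob A" 
  and "f \<oplus> g = Zr X Y" shows "g = neg A f"
  using assms add_cancel[of f X Y g "neg A f"] by simp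

lemma neg_neg[simp]: "f \<in> H X Y \<Longrightarrow> X \<in> Ob A \<Longrightarrow> Y \<in> Ob A \<Longrightarrow> neg A (neg A f) = f"
  using neg_unique[of "neg A f" X Y f] by simp

lemma neg_zr[simp]: "X \<in> Ob A \<Longrightarrow> Y \<in> Ob A \<Longrightarrow> neg A (Zr X Y) = Zr X Y"
  using neg_unique[of "Zr X Y" X Y "Zr X Y"] by simp

lemma cmp_zr_l[simp]: assumes "f \<in> H X Y" "X \<in> Ob A" "Y \<in> Ob A" "W \<in> Ob A" 
  shows "Zr Y W \<cdot> f = Zr X W"
proof -
  have h: "Zr Y W \<cdot> f \<in> H X W" using assms by blast
  have "Zr Y W \<cdot> f \<oplus> Zr Y W \<cdot> f = Zr Y W \<cdot> f \<oplus> Zr X W"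
    using assms h distl[of f X Y "Zr Y W" W "Zr Y W"] by simp
  then show ?thesis using add_cancel[OF h h] assms by simp
qed

lemma cmp_zr_r[simp]: assumes "g \<in> H Y W" "X \<in> Ob A" "Y \<in> Ob A" "W \<in> Ob A" 
  shows "g \<cdot> Zr X Y = Zr X W"
proof -
  have h: "g \<cdot> Zr X Y \<in> H X W" using assms by blast
  have "g \<cdot> Zr X Y \<oplus> g \<cdot> Zr X Y = g \<cdot> Zr X Y \<oplus> Zr X W"
    using assms h distr[of "Zr X Y" X Y "Zr X Y" g W] by simp
  then show ?thesis using add_cancel[OF h h] assms by simp
qed

lemma neg_cmp[simp]: assumes "f \<in> H X Y" "g \<in> H Y W" "X \<in> Ob A" "Y \<in> Ob A" "W \<in> Ob A" 
  shows "neg A g \<cdot> f = neg A (g \<cdot> f)"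
proof -
  have "g \<cdot> f \<oplus> neg A g \<cdot> f = Zr X W"
    using assms distl[of f X Y g W "neg A g"] by simp
  moreover have "g \<cdot> f \<in> H X W" "neg A g \<cdot> f \<in> H X W" using assms by blast+
  ultimately show ?thesis using assms neg_unique[of "g \<cdot> f" X W "neg A g \<cdot> f"] by simp
qed

lemma cmp_neg[simp]: assumes "f \<in> H X Y" "g \<in> H Y W" "X \<in> Ob A" "Y \<in> Ob A" "W \<in> Ob A" 
  shows "g \<cdot> neg A f = neg A (g \<cdot> f)"
proof -
  have "g \<cdot> f \<oplus> g \<cdot> neg A f = Zr X W"
    using assms distr[of f X Y "neg A f" g W] by simp
  moreover have "g \<cdot> f \<in> H X W" "g \<cdot> neg A f \<in> H X W" using assms by blast+
  ultimately show ?thesis using assms neg_unique[of "g \<cdot> f" X W "g \<cdot> neg A f"] by simp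
qed

lemma add_left_comm: assumes "f \<in> H X Y" "g \<in> H X Y" "h \<in> H X Y" "X \<in> Ob A" "Y \<in> Ob A" 
  shows "f \<oplus> (g \<oplus> h) = g \<oplus> (f \<oplus> h)"
proof -
  have "f \<oplus> (g \<oplus> h) = (f \<oplus> g) \<oplus> h" using assms add_assoc by simp
  also have "\<dots> = (g \<oplus> f) \<oplus> h" using assms add_comm[of f X Y g] by simp
  also have "\<dots> = g \<oplus> (f \<oplus> h)" using assms add_assoc by simp
  finally show ?thesis .
qed

lemma neg_add: assumes "f \<in> H X Y" "g \<in> H X Y" "X \<in> Ob A" "Y \<in> Ob A" 
  shows "neg A (f \<oplus> g) = neg A f \<oplus> neg A g"
proof -
  have "g \<oplus> (neg A f \<oplus> neg A g) = neg A f \<oplus> (g \<oplus> neg A g)"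
    using assms add_left_comm[of g X Y "neg A f" "neg A g"] by simp
  then have 1: "g \<oplus> (neg A f \<oplus> neg A g) = neg A f" using assms by simp
  have "(f \<oplus> g) \<oplus> (neg A f \<oplus> neg A g) = f \<oplus> (g \<oplus> (neg A f \<oplus> neg A g))"
    using assms add_assoc[of f X Y g "neg A f \<oplus> neg A g"] by simp
  then have "(f \<oplus> g) \<oplus> (neg A f \<oplus> neg A g) = Zr X Y" using assms 1 by simp
  then show ?thesis using assms neg_unique[of "f \<oplus> g" X Y "neg A f \<oplus> neg A g"] by simp
qed

lemma sub_zr_iff: assumes "f \<in> H X Y" "g \<in> H X Y" "X \<in> Ob A" "Y \<in> Ob A" 
  shows "f \<ominus> g = Zr X Y \<longleftrightarrow> f = g"
proof
  assume "f \<ominus> g = Zr X Y"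
  then have "neg A g = neg A f" using assms neg_unique[of f X Y "neg A g"] by simp
  then show "f = g" using assms by (metis neg_neg)
qed (use assms in simp)

lemmas add_ac = add_assoc add_comm add_left_comm

lemma distl_sub: "f \<in> H X Y \<Longrightarrow> g \<in> H Y W \<Longrightarrow> g' \<in> H Y W \<Longrightarrow> X \<in> Ob A \<Longrightarrow> Y \<in> Ob A \<Longrightarrow> W \<in> Ob A \<Longrightarrow> (g \<ominus> g') \<cdot> f = g \<cdot> f \<ominus> g' \<cdot> f"
  by (simp add: distl)
lemma distr_sub: "f \<in> H X Y \<Longrightarrow> f' \<in> H X Y \<Longrightarrow> g \<in> H Y W \<Longrightarrow> X \<in> Ob A \<Longrightarrow> Y \<in> Ob A \<Longrightarrow> W \<in> Ob A \<Longrightarrow> g \<cdot> (f \<ominus> f') = g \<cdot> f \<ominus> g \<cdot> f'"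
  by (simp add: distr)

end

context abcat begin

lemma zero_obj_ex: "\<exists>Z0. is_zero_obj A Z0" using ab unfolding abelian_def by blast
lemma bip_ex: "X \<in> Ob A \<Longrightarrow> Y \<in> Ob A \<Longrightarrow> \<exists>S i1 i2 p1 p2. is_biproduct A X Y S i1 i2 p1 p2"
  using ab unfolding abelian_def by blast
lemma coker_ex: "f \<in> H X Y \<Longrightarrow> X \<in> Ob A \<Longrightarrow> Y \<in> Ob A \<Longrightarrow> \<exists>Q q. is_cokernel A X Y Q f q"
  using ab unfolding abelian_def by blast
lemma ker_ex: "f \<in> H X Y \<Longrightarrow> X \<in> Ob A \<Longrightarrow> Y \<in> Ob A \<Longrightarrow> \<exists>K k. is_kernel A K X Y k f"
  using ab unfolding abelian_def by blast
lemma mono_ker: "is_mono A X Y f \<Longrightarrow> X \<in> Ob A \<Longrightarrow> Y \<in> Ob A \<Longrightarrow> \<exists>Z g. is_kernel A X Y Z f g"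
  using ab unfolding abelian_def by blast
lemma epi_coker: "is_epi A X Y f \<Longrightarrow> X \<in> Ob A \<Longrightarrow> Y \<in> Ob A \<Longrightarrow> \<exists>Z g. is_cokernel A Z X Y g f"
  using ab unfolding abelian_def by blast

lemma ker_D: assumes "is_kernel A K X Y k f"
  shows "K \<in> Ob A" "X \<in> Ob A" "Y \<in> Ob A" "k \<in> H K X" "f \<in> H X Y" "f \<cdot> k = Zr K Y"
  using assms unfolding is_kernel_def by auto

lemma ker_fac: assumes "is_kernel A K X Y k f" "g \<in> H W X" "W \<in> Ob A" "f \<cdot> g = Zr W Y"
  shows "\<exists>h\<in>H W K. k \<cdot> h = g"
proof -
  have "\<forall>Z\<in>Ob A. \<forall>g\<in>H Z X. f \<cdot> g = Zr Z Y \<longrightarrow> (\<exists>!h. h \<in> H Z K \<and> k \<cdot> h = g)"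
    using assms(1) unfolding is_kernel_def by (elim conjE)
  then have "\<exists>!h. h \<in> H W K \<and> k \<cdot> h = g" using assms by blast
  then show ?thesis by blast
qed

lemma ker_mono: assumes "is_kernel A K X Y k f" "a \<in> H W K" "b \<in> H W K" "W \<in> Ob A" "k \<cdot> a = k \<cdot> b"
  shows "a = b"
proof -
  note D = ker_D[OF assms(1)]
  have ka: "k \<cdot> a \<in> H W X" using D assms by blast
  have "f \<cdot> (k \<cdot> a) = (f \<cdot> k) \<cdot> a" using D assms assoc[of a W K k X f Y] by simp
  also have "\<dots> = Zr W Y" using D assms by simp
  finally have z: "f \<cdot> (k \<cdot> a) = Zr W Y" .
  have "\<forall>Z\<in>Ob A. \<forall>g\<in>H Z X. f \<cdot> g = Zr Z Y \<longrightarrow> (\<exists>!h. h \<in> H Z K \<and> k \<cdot> h = g)"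
    using assms(1) unfolding is_kernel_def by (elim conjE)
  then have "\<exists>!h. h \<in> H W K \<and> k \<cdot> h = k \<cdot> a" using ka z assms(4) by blast
  then obtain h0 where "\<And>y. y \<in> H W K \<and> k \<cdot> y = k \<cdot> a \<Longrightarrow> y = h0" by (elim ex1E) blast
  then show ?thesis using assms by metis
qed

lemma coker_D: assumes "is_cokernel A X Y Q f q"
  shows "X \<in> Ob A" "Y \<in> Ob A" "Q \<in> Ob A" "f \<in> H X Y" "q \<in> H Y Q" "q \<cdot> f = Zr X Q"
  using assms unfolding is_cokernel_def by auto

lemma coker_fac: assumes "is_cokernel A X Y Q f q" "g \<in> H Y W" "W \<in> Ob A" "g \<cdot> f = Zr X W"
  shows "\<exists>h\<in>H Q W. h \<cdot> q = g"
proof -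
  have "\<forall>Z\<in>Ob A. \<forall>g\<in>H Y Z. g \<cdot> f = Zr X Z \<longrightarrow> (\<exists>!h. h \<in> H Q Z \<and> h \<cdot> q = g)"
    using assms(1) unfolding is_cokernel_def by (elim conjE)
  then have "\<exists>!h. h \<in> H Q W \<and> h \<cdot> q = g" using assms by blast
  then show ?thesis by blast
qed

lemma coker_epi: assumes "is_cokernel A X Y Q f q" "a \<in> H Q W" "b \<in> H Q W" "W \<in> Ob A" "a \<cdot> q = b \<cdot> q"
  shows "a = b"
proof -
  note D = coker_D[OF assms(1)]
  have ka: "a \<cdot> q \<in> H Y W" using D assms by blast
  have "(a \<cdot> q) \<cdot> f = a \<cdot> (q \<cdot> f)" using D assms assoc[of f X Y q Q a W] by simp
  also have "\<dots> = Zr X W" using D assms by simp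
  finally have z: "(a \<cdot> q) \<cdot> f = Zr X W" .
  have "\<forall>Z\<in>Ob A. \<forall>g\<in>H Y Z. g \<cdot> f = Zr X Z \<longrightarrow> (\<exists>!h. h \<in> H Q Z \<and> h \<cdot> q = g)"
    using assms(1) unfolding is_cokernel_def by (elim conjE)
  then have "\<exists>!h. h \<in> H Q W \<and> h \<cdot> q = a \<cdot> q" using ka z assms(4) by blast
  then obtain h0 where "\<And>y. y \<in> H Q W \<and> y \<cdot> q = a \<cdot> q \<Longrightarrow> y = h0" by (elim ex1E) blast
  then show ?thesis using assms by metis
qed

lemma bip_D: assumes "is_biproduct A X Y S i1 i2 p1 p2"
  shows "X \<in> Ob A" "Y \<in> Ob A" "S \<in> Ob A" "i1 \<in> H X S" "i2 \<in> H Y S" "p1 \<in> H S X" "p2 \<in> H S Y"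
    "p1 \<cdot> i1 = I X" "p2 \<cdot> i2 = I Y" "p1 \<cdot> i2 = Zr Y X" "p2 \<cdot> i1 = Zr X Y"
    "i1 \<cdot> p1 \<oplus> i2 \<cdot> p2 = I S"
  using assms unfolding is_biproduct_def by auto

lemma bip_in_decomp: assumes "is_biproduct A X Y S i1 i2 p1 p2" "x \<in> H W S" "W \<in> Ob A"
  shows "x = i1 \<cdot> (p1 \<cdot> x) \<oplus> i2 \<cdot> (p2 \<cdot> x)"
proof -
  note D = bip_D[OF assms(1)]
  have "x = I S \<cdot> x" using D assms by simp
  also have "\<dots> = (i1 \<cdot> p1) \<cdot> x \<oplus> (i2 \<cdot> p2) \<cdot> x"
    using distl[of x W S "i1 \<cdot> p1" S "i2 \<cdot> p2"] comp_h[OF D(6) D(4)] comp_h[OF D(7) D(5)] D assms by simp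
  also have "\<dots> = i1 \<cdot> (p1 \<cdot> x) \<oplus> i2 \<cdot> (p2 \<cdot> x)"
    using D assms assoc[of x W S p1 X i1 S] assoc[of x W S p2 Y i2 S] by simp
  finally show ?thesis .
qed

lemma bip_out_decomp: assumes "is_biproduct A X Y S i1 i2 p1 p2" "x \<in> H S W" "W \<in> Ob A"
  shows "x = (x \<cdot> i1) \<cdot> p1 \<oplus> (x \<cdot> i2) \<cdot> p2"
proof -
  note D = bip_D[OF assms(1)]
  have "x = x \<cdot> I S" using D assms by simp
  also have "\<dots> = x \<cdot> (i1 \<cdot> p1) \<oplus> x \<cdot> (i2 \<cdot> p2)"
    using distr[of "i1 \<cdot> p1" S S "i2 \<cdot> p2" x W] comp_h[OF D(6) D(4)] comp_h[OF D(7) D(5)] D assms by simp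
  also have "\<dots> = (x \<cdot> i1) \<cdot> p1 \<oplus> (x \<cdot> i2) \<cdot> p2"
    using D assms assoc[of p1 S X i1 S x W] assoc[of p2 S Y i2 S x W] by simp
  finally show ?thesis .
qed

lemma bip_in_ext: assumes "is_biproduct A X Y S i1 i2 p1 p2" "x \<in> H W S" "y \<in> H W S" "W \<in> Ob A"
  "p1 \<cdot> x = p1 \<cdot> y" "p2 \<cdot> x = p2 \<cdot> y" shows "x = y"
  using bip_in_decomp[OF assms(1,2,4)] bip_in_decomp[OF assms(1,3,4)] assms(5,6) by simp

lemma bip_out_ext: assumes "is_biproduct A X Y S i1 i2 p1 p2" "x \<in> H S W" "y \<in> H S W" "W \<in> Ob A"
  "x \<cdot> i1 = y \<cdot> i1" "x \<cdot> i2 = y \<cdot> i2" shows "x = y"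
  using bip_out_decomp[OF assms(1,2,4)] bip_out_decomp[OF assms(1,3,4)] assms(5,6) by simp

lemma bip_pair: assumes "is_biproduct A X Y S i1 i2 p1 p2" "a \<in> H W X" "b \<in> H W Y" "W \<in> Ob A"
  shows "i1 \<cdot> a \<oplus> i2 \<cdot> b \<in> H W S" "p1 \<cdot> (i1 \<cdot> a \<oplus> i2 \<cdot> b) = a" "p2 \<cdot> (i1 \<cdot> a \<oplus> i2 \<cdot> b) = b"
proof -
  note D = bip_D[OF assms(1)]
  show "i1 \<cdot> a \<oplus> i2 \<cdot> b \<in> H W S" using D assms by blast
  have "p1 \<cdot> (i1 \<cdot> a \<oplus> i2 \<cdot> b) = p1 \<cdot> (i1 \<cdot> a) \<oplus> p1 \<cdot> (i2 \<cdot> b)"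
    using distr[of "i1 \<cdot> a" W S "i2 \<cdot> b" p1 X] comp_h[OF assms(2) D(4)] comp_h[OF assms(3) D(5)] D assms by simp
  also have "\<dots> = (p1 \<cdot> i1) \<cdot> a \<oplus> (p1 \<cdot> i2) \<cdot> b"
    using D assms assoc[of a W X i1 S p1 X] assoc[of b W Y i2 S p1 X] by simp
  also have "\<dots> = a" using D assms by simp
  finally show "p1 \<cdot> (i1 \<cdot> a \<oplus> i2 \<cdot> b) = a" .
  have "p2 \<cdot> (i1 \<cdot> a \<oplus> i2 \<cdot> b) = p2 \<cdot> (i1 \<cdot> a) \<oplus> p2 \<cdot> (i2 \<cdot> b)"
    using distr[of "i1 \<cdot> a" W S "i2 \<cdot> b" p2 Y] comp_h[OF assms(2) D(4)] comp_h[OF assms(3) D(5)] D assms by simp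
  also have "\<dots> = (p2 \<cdot> i1) \<cdot> a \<oplus> (p2 \<cdot> i2) \<cdot> b"
    using D assms assoc[of a W X i1 S p2 Y] assoc[of b W Y i2 S p2 Y] by simp
  also have "\<dots> = b" using D assms by simp
  finally show "p2 \<cdot> (i1 \<cdot> a \<oplus> i2 \<cdot> b) = b" .
qed

lemma bip_copair: assumes "is_biproduct A X Y S i1 i2 p1 p2" "a \<in> H X W" "b \<in> H Y W" "W \<in> Ob A"
  shows "a \<cdot> p1 \<oplus> b \<cdot> p2 \<in> H S W" "(a \<cdot> p1 \<oplus> b \<cdot> p2) \<cdot> i1 = a" "(a \<cdot> p1 \<oplus> b \<cdot> p2) \<cdot> i2 = b"
proof -
  note D = bip_D[OF assms(1)]
  show "a \<cdot> p1 \<oplus> b \<cdot> p2 \<in> H S W" using D assms by blast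
  have "(a \<cdot> p1 \<oplus> b \<cdot> p2) \<cdot> i1 = (a \<cdot> p1) \<cdot> i1 \<oplus> (b \<cdot> p2) \<cdot> i1"
    using distl[of i1 X S "a \<cdot> p1" W "b \<cdot> p2"] comp_h[OF D(6) assms(2)] comp_h[OF D(7) assms(3)] D assms by simp
  also have "\<dots> = a \<cdot> (p1 \<cdot> i1) \<oplus> b \<cdot> (p2 \<cdot> i1)"
    using D assms assoc[of i1 X S p1 X a W] assoc[of i1 X S p2 Y b W] by simp
  also have "\<dots> = a" using D assms by simp
  finally show "(a \<cdot> p1 \<oplus> b \<cdot> p2) \<cdot> i1 = a" .
  have "(a \<cdot> p1 \<oplus> b \<cdot> p2) \<cdot> i2 = (a \<cdot> p1) \<cdot> i2 \<oplus> (b \<cdot> p2) \<cdot> i2"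
    using distl[of i2 Y S "a \<cdot> p1" W "b \<cdot> p2"] comp_h[OF D(6) assms(2)] comp_h[OF D(7) assms(3)] D assms by simp
  also have "\<dots> = a \<cdot> (p1 \<cdot> i2) \<oplus> b \<cdot> (p2 \<cdot> i2)"
    using D assms assoc[of i2 Y S p1 X a W] assoc[of i2 Y S p2 Y b W] by simp
  also have "\<dots> = b" using D assms by simp
  finally show "(a \<cdot> p1 \<oplus> b \<cdot> p2) \<cdot> i2 = b" .
qed

end

context abcat begin

lemma KC: assumes mono: "is_mono A X Y m" and ck: "is_cokernel A X Y Q m c"
  shows "is_kernel A X Y Q m c"
proof -
  note D = coker_D[OF ck]
  obtain Z0 g where kg: "is_kernel A X Y Z0 m g" using mono_ker[OF mono D(1,2)] by blast
  note K = ker_D[OF kg]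
  obtain t where t: "t \<in> H Q Z0" "t \<cdot> c = g" using coker_fac[OF ck K(5) K(3) K(6)] by blast
  have ex: "\<exists>h\<in>H W X. m \<cdot> h = z" if z: "z \<in> H W Y" "W \<in> Ob A" "c \<cdot> z = Zr W Q" for W z
  proof -
    have "g \<cdot> z = t \<cdot> (c \<cdot> z)" using assoc[OF z(1) D(5) t(1)] t D K z by simp
    also have "\<dots> = Zr W Z0" using z t D K by simp
    finally show ?thesis using ker_fac[OF kg z(1) z(2)] by simp
  qed
  have mo: "\<And>W a b. W \<in> Ob A \<Longrightarrow> a \<in> H W X \<Longrightarrow> b \<in> H W X \<Longrightarrow> m \<cdot> a = m \<cdot> b \<Longrightarrow> a = b"
    using mono unfolding is_mono_def by blast
  show ?thesis unfolding is_kernel_def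
  proof (intro conjI ballI impI)
    fix W z assume "W \<in> Ob A" "z \<in> H W Y" "c \<cdot> z = Zr W Q"
    then show "\<exists>!h. h \<in> H W X \<and> m \<cdot> h = z" using ex mo by metis
  qed (use D in auto)
qed

end

locale frob = abcat +
  fixes C
  assumes ext: "ext_closed_additive A C" and fr: "frobenius A C"
begin

lemma C_ob: "X \<in> C \<Longrightarrow> X \<in> Ob A" using ext unfolding ext_closed_additive_def by blast

lemma conf_D: assumes "conflation A C X E Y i p"
  shows "X \<in> C" "E \<in> C" "Y \<in> C" "X \<in> Ob A" "E \<in> Ob A" "Y \<in> Ob A" "i \<in> H X E" "p \<in> H E Y"
   "p \<cdot> i = Zr X Y" "is_kernel A X E Y i p" "is_cokernel A X E Y i p"
  using assms C_ob unfolding conflation_def short_exact_def is_kernel_def by auto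

lemma ext_cl: "short_exact A X E Y i p \<Longrightarrow> X \<in> C \<Longrightarrow> Y \<in> C \<Longrightarrow> E \<in> C"
  using ext unfolding ext_closed_additive_def by blast


lemma pushout:
  assumes cf: "conflation A C M J Y i p" and a: "a \<in> H M N" and NC: "N \<in> C"
  shows "\<exists>E i' p' \<Phi>. conflation A C N E Y i' p' \<and> \<Phi> \<in> H J E \<and> \<Phi> \<cdot> i = i' \<cdot> a \<and> p' \<cdot> \<Phi> = p \<and>
   (\<forall>W\<in>Ob A. \<forall>\<alpha>\<in>H J W. \<forall>\<beta>\<in>H N W. \<alpha> \<cdot> i = \<beta> \<cdot> a \<longrightarrow> (\<exists>\<phi>\<in>H E W. \<phi> \<cdot> \<Phi> = \<alpha> \<and> \<phi> \<cdot> i' = \<beta>)) \<and>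
   (\<forall>W\<in>Ob A. \<forall>\<phi>1\<in>H E W. \<forall>\<phi>2\<in>H E W. \<phi>1 \<cdot> \<Phi> = \<phi>2 \<cdot> \<Phi> \<and> \<phi>1 \<cdot> i' = \<phi>2 \<cdot> i' \<longrightarrow> \<phi>1 = \<phi>2)"
proof -
  note F = conf_D[OF cf]
  have N: "N \<in> Ob A" using NC C_ob by blast
  obtain B jI jN qI qN where bp: "is_biproduct A J N B jI jN qI qN" using bip_ex[OF F(5) N] by blast
  note BD = bip_D[OF bp]
  define m where "m = jI \<cdot> i \<ominus> jN \<cdot> a"
  have t1: "jI \<cdot> i \<in> H M B" "jN \<cdot> a \<in> H M B" using BD F a N by blast+
  have mh: "m \<in> H M B" unfolding m_def using t1 BD F by simp
  obtain E c where ck: "is_cokernel A M B E m c" using coker_ex[OF mh F(4) BD(3)] by blast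
  note CD = coker_D[OF ck]
  have Eo: "E \<in> Ob A" using CD by simp
  define \<Phi> where "\<Phi> = c \<cdot> jI"
  define i' where "i' = c \<cdot> jN"
  have \<Phi>h: "\<Phi> \<in> H J E" unfolding \<Phi>_def using CD BD by blast
  have i'h: "i' \<in> H N E" unfolding i'_def using CD BD by blast
  have qm: "qI \<cdot> m = i"
  proof -
    have "qI \<cdot> m = qI \<cdot> (jI \<cdot> i) \<ominus> qI \<cdot> (jN \<cdot> a)"
      unfolding m_def using distr_sub[OF t1 BD(6)] BD F by simp
    also have "\<dots> = (qI \<cdot> jI) \<cdot> i \<ominus> (qI \<cdot> jN) \<cdot> a"
      using assoc[OF F(7) BD(4) BD(6)] assoc[OF a BD(5) BD(6)] BD F N by simp
    also have "\<dots> = i" using BD F N a by simp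
    finally show ?thesis .
  qed
  have sq: "\<Phi> \<cdot> i = i' \<cdot> a"
  proof -
    have "c \<cdot> m = c \<cdot> (jI \<cdot> i) \<ominus> c \<cdot> (jN \<cdot> a)"
      unfolding m_def using distr_sub[OF t1 CD(5)] BD F CD by simp
    also have "\<dots> = \<Phi> \<cdot> i \<ominus> i' \<cdot> a" unfolding \<Phi>_def i'_def
      using assoc[OF F(7) BD(4) CD(5)] assoc[OF a BD(5) CD(5)] BD F N CD by simp
    finally have "\<Phi> \<cdot> i \<ominus> i' \<cdot> a = Zr M E" using CD by simp
    moreover have "\<Phi> \<cdot> i \<in> H M E" "i' \<cdot> a \<in> H M E" using \<Phi>h i'h F a N Eo by blast+
    ultimately show ?thesis using sub_zr_iff F Eo by blast
  qed
  have univ: "\<exists>\<phi>\<in>H E W. \<phi> \<cdot> \<Phi> = \<alpha> \<and> \<phi> \<cdot> i' = \<beta>"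
    if W: "W \<in> Ob A" and al: "\<alpha> \<in> H J W" and be: "\<beta> \<in> H N W" and eq: "\<alpha> \<cdot> i = \<beta> \<cdot> a" for W \<alpha> \<beta>
  proof -
    define \<gamma> where "\<gamma> = \<alpha> \<cdot> qI \<oplus> \<beta> \<cdot> qN"
    have g: "\<gamma> \<in> H B W" "\<gamma> \<cdot> jI = \<alpha>" "\<gamma> \<cdot> jN = \<beta>" unfolding \<gamma>_def using bip_copair[OF bp al be W] by auto
    have "\<gamma> \<cdot> m = \<gamma> \<cdot> (jI \<cdot> i) \<ominus> \<gamma> \<cdot> (jN \<cdot> a)"
      unfolding m_def using distr_sub[OF t1 g(1)] BD F W by simp
    also have "\<dots> = \<alpha> \<cdot> i \<ominus> \<beta> \<cdot> a"
      using assoc[OF F(7) BD(4) g(1)] assoc[OF a BD(5) g(1)] BD F N W g by simp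
    also have "\<dots> = Zr M W" using eq be a F N W by simp
    finally obtain \<phi> where ph: "\<phi> \<in> H E W" "\<phi> \<cdot> c = \<gamma>" using coker_fac[OF ck g(1) W] by blast
    have "\<phi> \<cdot> \<Phi> = \<alpha>" unfolding \<Phi>_def using assoc[OF BD(4) CD(5) ph(1)] ph g BD CD W by simp
    moreover have "\<phi> \<cdot> i' = \<beta>" unfolding i'_def using assoc[OF BD(5) CD(5) ph(1)] ph g BD CD W by simp
    ultimately show ?thesis using ph by blast
  qed
  have uniq: "\<phi>1 = \<phi>2" if W: "W \<in> Ob A" and h1: "\<phi>1 \<in> H E W" and h2: "\<phi>2 \<in> H E W"
    and e1: "\<phi>1 \<cdot> \<Phi> = \<phi>2 \<cdot> \<Phi>" and e2: "\<phi>1 \<cdot> i' = \<phi>2 \<cdot> i'" for W \<phi>1 \<phi>2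
  proof -
    have x1: "\<phi>1 \<cdot> c \<in> H B W" "\<phi>2 \<cdot> c \<in> H B W" using h1 h2 CD W by blast+
    have "(\<phi>1 \<cdot> c) \<cdot> jI = (\<phi>2 \<cdot> c) \<cdot> jI" using e1 unfolding \<Phi>_def
      using assoc[OF BD(4) CD(5) h1] assoc[OF BD(4) CD(5) h2] BD CD W by simp
    moreover have "(\<phi>1 \<cdot> c) \<cdot> jN = (\<phi>2 \<cdot> c) \<cdot> jN" using e2 unfolding i'_def
      using assoc[OF BD(5) CD(5) h1] assoc[OF BD(5) CD(5) h2] BD CD W by simp
    ultimately have "\<phi>1 \<cdot> c = \<phi>2 \<cdot> c" using bip_out_ext[OF bp x1 W] by blast
    then show ?thesis using coker_epi[OF ck h1 h2 W] by blast
  qed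
  have pq: "p \<cdot> qI \<in> H B Y" using F BD by blast
  have "(p \<cdot> qI) \<cdot> m = p \<cdot> i" using assoc[OF mh BD(6) F(8)] qm BD F by simp
  then have "(p \<cdot> qI) \<cdot> m = Zr M Y" using F by simp
  then obtain p' where p': "p' \<in> H E Y" "p' \<cdot> c = p \<cdot> qI" using coker_fac[OF ck pq F(6)] by blast
  have p'\<Phi>: "p' \<cdot> \<Phi> = p" unfolding \<Phi>_def
    using assoc[OF BD(4) CD(5) p'(1)] assoc[OF BD(4) BD(6) F(8)] p' BD CD F by simp
  have p'i': "p' \<cdot> i' = Zr N Y" unfolding i'_def
    using assoc[OF BD(5) CD(5) p'(1)] assoc[OF BD(5) BD(6) F(8)] p' BD CD F by simp
  have ckp': "is_cokernel A N E Y i' p'" unfolding is_cokernel_def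
  proof (intro conjI ballI impI)
    fix W g assume W: "W \<in> Ob A" and g: "g \<in> H E W" and gi: "g \<cdot> i' = Zr N W"
    have "(g \<cdot> \<Phi>) \<cdot> i = g \<cdot> (i' \<cdot> a)" using assoc[OF F(7) \<Phi>h g] sq F Eo W by simp
    also have "\<dots> = Zr M W" using assoc[OF a i'h g] gi a F N Eo W by simp
    finally have "(g \<cdot> \<Phi>) \<cdot> i = Zr M W" .
    moreover have g\<Phi>: "g \<cdot> \<Phi> \<in> H J W" using g \<Phi>h F Eo W by blast
    ultimately obtain h where h: "h \<in> H Y W" "h \<cdot> p = g \<cdot> \<Phi>" using coker_fac[OF F(11) _ W] by blast
    have hp': "h \<cdot> p' \<in> H E W" using h p' F Eo W by blast
    have "(h \<cdot> p') \<cdot> \<Phi> = g \<cdot> \<Phi>" using assoc[OF \<Phi>h p'(1) h(1)] p'\<Phi> h F Eo W by simp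
    moreover have "(h \<cdot> p') \<cdot> i' = g \<cdot> i'" using assoc[OF i'h p'(1) h(1)] p'i' gi h F N Eo W by simp
    ultimately have ex: "h \<cdot> p' = g" using uniq[OF W hp' g] by blast
    have un: "h1 = h2" if "h1 \<in> H Y W" "h2 \<in> H Y W" "h1 \<cdot> p' = h2 \<cdot> p'" for h1 h2
    proof -
      have "h1 \<cdot> p = h2 \<cdot> p" using that p'\<Phi> assoc[OF \<Phi>h p'(1) that(1)] assoc[OF \<Phi>h p'(1) that(2)] F Eo W
        by metis
      then show ?thesis using coker_epi[OF F(11) that(1,2) W] by blast
    qed
    show "\<exists>!h. h \<in> H Y W \<and> h \<cdot> p' = g" using ex h(1) un by blast
  qed (use N Eo F i'h p' p'i' in auto)
  have mono_m: "is_mono A M B m" unfolding is_mono_def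
  proof (intro conjI ballI impI)
    fix W w1 w2 assume W: "W \<in> Ob A" and w: "w1 \<in> H W M" "w2 \<in> H W M" and e: "m \<cdot> w1 = m \<cdot> w2"
    have "i \<cdot> w1 = i \<cdot> w2" using e qm assoc[OF w(1) mh BD(6)] assoc[OF w(2) mh BD(6)] BD F W by metis
    then show "w1 = w2" using ker_mono[OF F(10) w W] by blast
  qed (use mh in auto)
  have km: "is_kernel A M B E m c" using KC[OF mono_m ck] .
  have mono_i': "is_mono A N E i'" unfolding is_mono_def
  proof (intro conjI ballI impI)
    fix W z1 z2 assume W: "W \<in> Ob A" and z: "z1 \<in> H W N" "z2 \<in> H W N" and e: "i' \<cdot> z1 = i' \<cdot> z2"
    define z where "z = z1 \<ominus> z2"
    have zh: "z \<in> H W N" unfolding z_def using z W N by simp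
    have jz: "jN \<cdot> z \<in> H W B" using zh BD W by blast
    have "c \<cdot> (jN \<cdot> z) = i' \<cdot> z" unfolding i'_def using assoc[OF zh BD(5) CD(5)] BD CD W by simp
    also have "\<dots> = i' \<cdot> z1 \<ominus> i' \<cdot> z2" unfolding z_def using distr_sub[OF z i'h] W N Eo by simp
    also have "\<dots> = Zr W E" using e z i'h W N Eo by simp
    finally obtain w where w: "w \<in> H W M" "m \<cdot> w = jN \<cdot> z" using ker_fac[OF km jz W] by blast
    have "i \<cdot> w = qI \<cdot> (jN \<cdot> z)" using w qm assoc[OF w(1) mh BD(6)] BD F W by simp
    also have "\<dots> = Zr W J" using assoc[OF zh BD(5) BD(6)] BD F N W zh by simp
    also have "\<dots> = i \<cdot> Zr W M" using F W by simp
    finally have "w = Zr W M" using ker_mono[OF F(10) w(1) _ W] F W by simp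
    then have "jN \<cdot> z = Zr W B" using w BD F W mh cmp_zr_r[OF mh W] by simp
    then have "qN \<cdot> (jN \<cdot> z) = Zr W N" using BD W N by simp
    then have "z = Zr W N" using assoc[OF zh BD(5) BD(7)] BD W N zh by simp
    then show "z1 = z2" unfolding z_def using sub_zr_iff[OF z W N] by blast
  qed (use i'h in auto)
  have kp': "is_kernel A N E Y i' p'" using KC[OF mono_i' ckp'] .
  have se: "short_exact A N E Y i' p'" unfolding short_exact_def using kp' ckp' by blast
  have EC: "E \<in> C" using ext_cl[OF se NC F(3)] .
  have conf: "conflation A C N E Y i' p'" unfolding conflation_def using se EC NC F by blast
  show ?thesis
    apply (rule exI[of _ E], rule exI[of _ i'], rule exI[of _ p'], rule exI[of _ \<Phi>])
    using conf \<Phi>h sq p'\<Phi> univ uniq by blast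
qed


lemma proj_lift: "proj_obj A C P \<Longrightarrow> conflation A C X E Y i p \<Longrightarrow> g \<in> H P Y \<Longrightarrow> \<exists>h\<in>H P E. p \<cdot> h = g"
  unfolding proj_obj_def by blast
lemma inj_ext: "inj_obj A C P \<Longrightarrow> conflation A C X E Y i p \<Longrightarrow> g \<in> H X P \<Longrightarrow> \<exists>h\<in>H E P. h \<cdot> i = g"
  unfolding inj_obj_def by blast
lemma proj_inj: "proj_obj A C P \<longleftrightarrow> inj_obj A C P" using fr unfolding frobenius_def by blast
lemma proj_C: "proj_obj A C P \<Longrightarrow> P \<in> C" unfolding proj_obj_def by blast
lemma enough_inj: "X \<in> C \<Longrightarrow> \<exists>I Y i p. conflation A C X I Y i p \<and> inj_obj A C I"
  using fr unfolding frobenius_def by blast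

lemma split_retr: assumes cf: "conflation A C N E Y i p" and s: "s \<in> H Y E" and ps: "p \<cdot> s = I Y"
  shows "\<exists>r\<in>H E N. r \<cdot> i = I N"
proof -
  note F = conf_D[OF cf]
  have sp: "s \<cdot> p \<in> H E E" using s F by blast
  have x: "I E \<ominus> s \<cdot> p \<in> H E E" using sp F by simp
  have "p \<cdot> (I E \<ominus> s \<cdot> p) = p \<ominus> p \<cdot> (s \<cdot> p)" using distr_sub[OF _ sp F(8)] F by simp
  also have "\<dots> = Zr E Y" using assoc[OF F(8) s F(8)] ps F by simp
  finally obtain r where r: "r \<in> H E N" "i \<cdot> r = I E \<ominus> s \<cdot> p" using ker_fac[OF F(10) x F(5)] by blast
  have "i \<cdot> (r \<cdot> i) = (I E \<ominus> s \<cdot> p) \<cdot> i" using assoc[OF F(7) r(1) F(7)] r F by simp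
  also have "\<dots> = i \<ominus> (s \<cdot> p) \<cdot> i" using distl_sub[OF F(7) _ sp] F by simp
  also have "\<dots> = i" using assoc[OF F(7) F(8) s, symmetric] F s by simp
  also have "\<dots> = i \<cdot> I N" using F by simp
  finally have "r \<cdot> i = I N" using ker_mono[OF F(10) _ _ F(4)] r F by blast
  then show ?thesis using r by blast
qed

end

context abcat begin

lemma mono_zero: assumes k: "k \<in> H X Y" "X \<in> Ob A" "Y \<in> Ob A"
  and z: "\<And>W z. W \<in> Ob A \<Longrightarrow> z \<in> H W X \<Longrightarrow> k \<cdot> z = Zr W Y \<Longrightarrow> z = Zr W X"
  shows "is_mono A X Y k"
  unfolding is_mono_def
proof (intro conjI ballI impI)
  fix W a b assume W: "W \<in> Ob A" and ab: "a \<in> H W X" "b \<in> H W X" and e: "k \<cdot> a = k \<cdot> b"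
  have "k \<cdot> (a \<ominus> b) = Zr W Y" using distr_sub[OF ab k(1)] e ab k W by simp
  then have "a \<ominus> b = Zr W X" using z[OF W] ab k W by simp
  then show "a = b" using sub_zr_iff[OF ab W k(2)] by blast
qed (use k in auto)

lemma epi_zero: assumes k: "k \<in> H X Y" "X \<in> Ob A" "Y \<in> Ob A"
  and z: "\<And>W z. W \<in> Ob A \<Longrightarrow> z \<in> H Y W \<Longrightarrow> z \<cdot> k = Zr X W \<Longrightarrow> z = Zr Y W"
  shows "is_epi A X Y k"
  unfolding is_epi_def
proof (intro conjI ballI impI)
  fix W a b assume W: "W \<in> Ob A" and ab: "a \<in> H Y W" "b \<in> H Y W" and e: "a \<cdot> k = b \<cdot> k"
  have "(a \<ominus> b) \<cdot> k = Zr X W" using distl_sub[OF k(1) ab] e ab k W by simp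
  then have "a \<ominus> b = Zr Y W" using z[OF W] ab k W by simp
  then show "a = b" using sub_zr_iff[OF ab k(3) W] by blast
qed (use k in auto)

lemma mono_epi_iso: assumes mo: "is_mono A X Y f" and ep: "is_epi A X Y f" and X: "X \<in> Ob A" and Y: "Y \<in> Ob A"
  shows "\<exists>g\<in>H Y X. g \<cdot> f = I X \<and> f \<cdot> g = I Y"
proof -
  have fh: "f \<in> H X Y" using mo unfolding is_mono_def by blast
  obtain Z0 g0 where ck: "is_cokernel A Z0 X Y g0 f" using epi_coker[OF ep X Y] by blast
  note D = coker_D[OF ck]
  have "f \<cdot> g0 = f \<cdot> Zr Z0 X" using D X Y fh by simp
  then have "g0 = Zr Z0 X" using mo D X unfolding is_mono_def by blast
  then have "I X \<cdot> g0 = Zr Z0 X" using D X by simp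
  then obtain h where h: "h \<in> H Y X" "h \<cdot> f = I X" using coker_fac[OF ck id_h[OF X] X] by blast
  have "(f \<cdot> h) \<cdot> f = I Y \<cdot> f" using assoc[OF fh h(1) fh] h fh X Y by simp
  moreover have "f \<cdot> h \<in> H Y Y" using fh h X Y by blast
  ultimately have "f \<cdot> h = I Y" using ep Y unfolding is_epi_def by blast
  then show ?thesis using h by blast
qed

end

context frob begin

lemma five: assumes c1: "conflation A C M E1 X i1 p1" and c2: "conflation A C M E2 X i2 p2"
  and ps: "\<psi> \<in> H E1 E2" "\<psi> \<cdot> i1 = i2" "p2 \<cdot> \<psi> = p1"
  shows "\<exists>\<psi>'\<in>H E2 E1. \<psi>' \<cdot> i2 = i1 \<and> p1 \<cdot> \<psi>' = p2"
proof -
  note F1 = conf_D[OF c1] and F2 = conf_D[OF c2]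
  have mo: "is_mono A E1 E2 \<psi>"
  proof (rule mono_zero[OF ps(1) F1(5) F2(5)])
    fix W z assume W: "W \<in> Ob A" and z: "z \<in> H W E1" and e: "\<psi> \<cdot> z = Zr W E2"
    have "p1 \<cdot> z = p2 \<cdot> (\<psi> \<cdot> z)" using assoc[OF z ps(1) F2(8)] ps F1 F2 W by simp
    also have "\<dots> = Zr W X" using e F2 W by simp
    finally obtain w where w: "w \<in> H W M" "i1 \<cdot> w = z" using ker_fac[OF F1(10) z W] by blast
    have "i2 \<cdot> w = Zr W E2" using assoc[OF w(1) F1(7) ps(1)] ps w e F1 F2 W by simp
    then have "i2 \<cdot> w = i2 \<cdot> Zr W M" using F2 W by simp
    then have "w = Zr W M" using ker_mono[OF F2(10) w(1) _ W] F2 W by simp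
    then show "z = Zr W E1" using w F1 W by simp
  qed
  have ep: "is_epi A E1 E2 \<psi>"
  proof (rule epi_zero[OF ps(1) F1(5) F2(5)])
    fix W y assume W: "W \<in> Ob A" and y: "y \<in> H E2 W" and e: "y \<cdot> \<psi> = Zr E1 W"
    have "y \<cdot> i2 = (y \<cdot> \<psi>) \<cdot> i1" using assoc[OF F1(7) ps(1) y] ps F1 F2 W by simp
    also have "\<dots> = Zr M W" using e F1 W by simp
    finally obtain t where t: "t \<in> H X W" "t \<cdot> p2 = y" using coker_fac[OF F2(11) y W] by blast
    have "t \<cdot> p1 = Zr E1 W" using assoc[OF ps(1) F2(8) t(1)] ps t e F1 F2 W by simp
    then have "t \<cdot> p1 = Zr X W \<cdot> p1" using F1 W by simp
    then have "t = Zr X W" using coker_epi[OF F1(11) t(1) _ W] F1 W by simp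
    then show "y = Zr E2 W" using t F2 W by simp
  qed
  obtain g where g: "g \<in> H E2 E1" "g \<cdot> \<psi> = I E1" "\<psi> \<cdot> g = I E2" using mono_epi_iso[OF mo ep F1(5) F2(5)] by blast
  have "g \<cdot> i2 = i1" using assoc[OF F1(7) ps(1) g(1)] ps g F1 F2 by simp
  moreover have "p1 \<cdot> g = p2" using assoc[OF g(1) ps(1) F2(8)] ps g F1 F2 by simp
  ultimately show ?thesis using g by blast
qed

lemma retract_proj: assumes EC: "E \<in> C" and P1: "proj_obj A C P1" and P2: "proj_obj A C P2"
  and a1: "a1 \<in> H P1 E" and b1: "b1 \<in> H E P1" and a2: "a2 \<in> H P2 E" and b2: "b2 \<in> H E P2"
  and idE: "I E = a1 \<cdot> b1 \<oplus> a2 \<cdot> b2"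
  shows "proj_obj A C E"
  unfolding proj_obj_def
proof (intro conjI allI impI)
  fix X E' Y i p g assume h: "conflation A C X E' Y i p \<and> g \<in> H E Y"
  then have cf: "conflation A C X E' Y i p" and g: "g \<in> H E Y" by auto
  note F = conf_D[OF cf]
  have E: "E \<in> Ob A" "P1 \<in> Ob A" "P2 \<in> Ob A" using EC P1 P2 proj_C C_ob by blast+
  obtain h1 where h1: "h1 \<in> H P1 E'" "p \<cdot> h1 = g \<cdot> a1" using proj_lift[OF P1 cf] g a1 E F by blast
  obtain h2 where h2: "h2 \<in> H P2 E'" "p \<cdot> h2 = g \<cdot> a2" using proj_lift[OF P2 cf] g a2 E F by blast
  have t: "h1 \<cdot> b1 \<in> H E E'" "h2 \<cdot> b2 \<in> H E E'" using h1 h2 b1 b2 E F by blast+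
  have "p \<cdot> (h1 \<cdot> b1 \<oplus> h2 \<cdot> b2) = p \<cdot> (h1 \<cdot> b1) \<oplus> p \<cdot> (h2 \<cdot> b2)" using distr[OF t F(8)] E F by simp
  also have "\<dots> = (g \<cdot> a1) \<cdot> b1 \<oplus> (g \<cdot> a2) \<cdot> b2"
    using assoc[OF b1 h1(1) F(8)] assoc[OF b2 h2(1) F(8)] h1 h2 E F by simp
  also have "\<dots> = g \<cdot> (a1 \<cdot> b1 \<oplus> a2 \<cdot> b2)"
    using assoc[OF b1 a1 g] assoc[OF b2 a2 g] distr[of "a1 \<cdot> b1" E E "a2 \<cdot> b2" g Y] a1 b1 a2 b2 g E F
    by (metis comp_h)
  also have "\<dots> = g" using idE[symmetric] g E F by simp
  finally show "\<exists>h\<in>H E E'. p \<cdot> h = g" using t E F by blast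
qed (use EC in blast)

end

context frob begin

lemma part1_if: assumes M: "M \<in> C" and N: "N \<in> C" and f: "f \<in> H M N"
  and fp: "factors_through_proj A C M N f" shows "ext_phantom0 A C M N f"
proof -
  obtain P a b where P: "proj_obj A C P" and a: "a \<in> H M P" and b: "b \<in> H P N" and fab: "f = b \<cdot> a"
    using fp unfolding factors_through_proj_def by blast
  have Po: "P \<in> Ob A" using P proj_C C_ob by blast
  have Mo: "M \<in> Ob A" and No: "N \<in> Ob A" using M N C_ob by blast+
  show ?thesis unfolding ext_phantom0_def
  proof (intro ballI allI impI, elim conjE)
    fix X E i p E' i' p'
    assume X: "X \<in> C" and c1: "conflation A C M E X i p" and c2: "conflation A C N E' X i' p'"
      and ep: "ext_push A f E i p E' i' p'"
    note F1 = conf_D[OF c1] and F2 = conf_D[OF c2]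
    obtain \<phi> where ph: "\<phi> \<in> H E E'" "\<phi> \<cdot> i = i' \<cdot> f" "p' \<cdot> \<phi> = p" using ep unfolding ext_push_def by blast
    obtain h where h: "h \<in> H E P" "h \<cdot> i = a" using inj_ext[OF P[unfolded proj_inj] c1 a] by blast
    have bh: "b \<cdot> h \<in> H E N" using b h Po F1 No by blast
    have ibh: "i' \<cdot> (b \<cdot> h) \<in> H E E'" using bh F2 F1 No by blast
    define d where "d = \<phi> \<ominus> i' \<cdot> (b \<cdot> h)"
    have dh: "d \<in> H E E'" unfolding d_def using ph ibh F1 F2 by simp
    have "(i' \<cdot> (b \<cdot> h)) \<cdot> i = i' \<cdot> (b \<cdot> (h \<cdot> i))"
      using assoc[OF F1(7) bh F2(7)] assoc[OF F1(7) h(1) b] F1 F2 No Po by simp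
    also have "\<dots> = i' \<cdot> f" using h fab by simp
    finally have e1: "(i' \<cdot> (b \<cdot> h)) \<cdot> i = i' \<cdot> f" .
    have "d \<cdot> i = \<phi> \<cdot> i \<ominus> (i' \<cdot> (b \<cdot> h)) \<cdot> i" unfolding d_def using distl_sub[OF F1(7) ph(1) ibh] F1 F2 by simp
    also have "\<dots> = Zr M E'" using e1 ph f F2 Mo by simp
    finally obtain s where s: "s \<in> H X E'" "s \<cdot> p = d" using coker_fac[OF F1(11) dh F2(5)] by blast
    have "(p' \<cdot> s) \<cdot> p = p' \<cdot> d" using assoc[OF F1(8) s(1) F2(8)] s F1 F2 by simp
    also have "\<dots> = p \<ominus> p' \<cdot> (i' \<cdot> (b \<cdot> h))" unfolding d_def using distr_sub[OF ph(1) ibh F2(8)] ph F1 F2 by simp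
    also have "\<dots> = p" using assoc[OF bh F2(7) F2(8)] bh F1 F2 No by simp
    also have "\<dots> = I X \<cdot> p" using F1 by simp
    finally have "p' \<cdot> s = I X" using coker_epi[OF F1(11) _ _ F1(6)] s F2 F1 by blast
    then show "split_conf A E' X p'" unfolding split_conf_def using s by blast
  qed
qed

lemma part1_only_if: assumes M: "M \<in> C" and N: "N \<in> C" and f: "f \<in> H M N"
  and ph: "ext_phantom0 A C M N f" shows "factors_through_proj A C M N f"
proof -
  have Mo: "M \<in> Ob A" and No: "N \<in> Ob A" using M N C_ob by blast+
  obtain J Y i p where c1: "conflation A C M J Y i p" and J: "inj_obj A C J" using enough_inj[OF M] by blast
  note F1 = conf_D[OF c1]
  obtain E i' p' \<Phi> where c2: "conflation A C N E Y i' p'" and \<Phi>: "\<Phi> \<in> H J E" "\<Phi> \<cdot> i = i' \<cdot> f" "p' \<cdot> \<Phi> = p"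
    using pushout[OF c1 f N] by blast
  note F2 = conf_D[OF c2]
  have "ext_push A f J i p E i' p'" unfolding ext_push_def using \<Phi> by blast
  then have "split_conf A E Y p'" using ph c1 c2 F1 unfolding ext_phantom0_def by blast
  then obtain s where s: "s \<in> H Y E" "p' \<cdot> s = I Y" unfolding split_conf_def by blast
  obtain r where r: "r \<in> H E N" "r \<cdot> i' = I N" using split_retr[OF c2 s] by blast
  have "f = (r \<cdot> i') \<cdot> f" using r f Mo No by simp
  also have "\<dots> = (r \<cdot> \<Phi>) \<cdot> i" using assoc[OF f F2(7) r(1)] assoc[OF F1(7) \<Phi>(1) r(1)] \<Phi> F1 F2 Mo No by simp
  finally have "f = (r \<cdot> \<Phi>) \<cdot> i" .
  moreover have "r \<cdot> \<Phi> \<in> H J N" using r \<Phi> F1 F2 No by blast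
  moreover have "proj_obj A C J" using J proj_inj by blast
  ultimately show ?thesis unfolding factors_through_proj_def using F1 by blast
qed

end

context abcat begin

lemma add_sub_cancel: assumes "x \<in> H X Y" "y \<in> H X Y" "X \<in> Ob A" "Y \<in> Ob A"
  shows "x \<ominus> y \<oplus> y = x"
  using assms add_assoc[of x X Y "neg A y" y] by simp

lemma sub_sub_cancel: assumes "x \<in> H X Y" "y \<in> H X Y" "X \<in> Ob A" "Y \<in> Ob A"
  shows "x \<ominus> (x \<ominus> y) = y"
proof -
  have "x \<ominus> (x \<ominus> y) = x \<oplus> (neg A x \<oplus> y)" using assms neg_add[of x X Y "neg A y"] by simp
  also have "\<dots> = y" using assms add_assoc[of x X Y "neg A x" y] by simp
  finally show ?thesis .
qed

lemma eq_sub: assumes "a \<in> H X Y" "b \<in> H X Y" "c \<in> H X Y" "X \<in> Ob A" "Y \<in> Ob A" "a \<oplus> b = c"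
  shows "a = c \<ominus> b"
  using assms add_assoc[of a X Y b "neg A b"] by force

lemma eq_sub2: assumes "a \<in> H X Y" "b \<in> H X Y" "c \<in> H X Y" "X \<in> Ob A" "Y \<in> Ob A" "a \<oplus> b = c"
  shows "b = c \<ominus> a"
  using eq_sub[of b X Y a c] assms add_comm[of a X Y b] by simp

end

context frob begin

lemma adjust:
  assumes c1: "conflation A C M E X x y" and c2: "conflation A C M G X k pG"
    and ps: "\<psi>0 \<in> H E G" "\<psi>0 \<cdot> x = k \<cdot> c" "pG \<cdot> \<psi>0 = y"
    and c: "c \<in> H M M" and P: "proj_obj A C P" and l: "l \<in> H M P" and a: "a \<in> H P M"
    and ca: "c \<oplus> a \<cdot> l = I M"
  shows "\<exists>\<Psi>\<in>H E G. \<Psi> \<cdot> x = k \<and> pG \<cdot> \<Psi> = y"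
proof -
  note F1 = conf_D[OF c1] and F2 = conf_D[OF c2]
  have Po: "P \<in> Ob A" using P proj_C C_ob by blast
  obtain lam where la: "lam \<in> H E P" "lam \<cdot> x = l" using inj_ext[OF P[unfolded proj_inj] c1 l] by blast
  have al: "a \<cdot> lam \<in> H E M" using a la Po F1 by blast
  have kal: "k \<cdot> (a \<cdot> lam) \<in> H E G" using al F1 F2 by blast
  define \<Psi> where "\<Psi> = \<psi>0 \<oplus> k \<cdot> (a \<cdot> lam)"
  have \<Psi>h: "\<Psi> \<in> H E G" unfolding \<Psi>_def using ps kal F1 F2 by simp
  have "(k \<cdot> (a \<cdot> lam)) \<cdot> x = k \<cdot> (a \<cdot> l)"
    using assoc[OF F1(7) al F2(7), symmetric] assoc[OF F1(7) la(1) a, symmetric] la F1 F2 Po by simp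
  then have "\<Psi> \<cdot> x = k \<cdot> c \<oplus> k \<cdot> (a \<cdot> l)" unfolding \<Psi>_def
    using distl[OF F1(7) ps(1) kal] ps F1 F2 by simp
  also have "\<dots> = k \<cdot> (c \<oplus> a \<cdot> l)" using distr[OF c _ F2(7)] comp_h[OF l a] c F1 F2 Po by simp
  also have "\<dots> = k" using ca F1 F2 by simp
  finally have 1: "\<Psi> \<cdot> x = k" .
  have "pG \<cdot> \<Psi> = y \<oplus> (pG \<cdot> k) \<cdot> (a \<cdot> lam)" unfolding \<Psi>_def
    using distr[OF ps(1) kal F2(8)] assoc[OF al F2(7) F2(8)] ps F1 F2 by simp
  also have "\<dots> = y" using F1 F2 al by simp
  finally show ?thesis using 1 \<Psi>h by blast
qed

lemma part2_if:
  assumes M: "M \<in> C" and N: "N \<in> C" and f: "f \<in> H M N"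
    and P: "proj_obj A C P" and Q: "proj_obj A C Q" and g1: "g1 \<in> H Q N" and l: "l \<in> H M P" and g2: "g2 \<in> H Q P"
    and bS: "is_biproduct A M Q S i1 i2 p1 p2" and bT: "is_biproduct A N P T j1 j2 q1 q2"
    and h: "h \<in> H S T" and e1: "q1 \<cdot> (h \<cdot> i1) = f" and e2: "q1 \<cdot> (h \<cdot> i2) = g1"
    and e3: "q2 \<cdot> (h \<cdot> i1) = l" and e4: "q2 \<cdot> (h \<cdot> i2) = g2" and iso: "is_iso A S T h"
  shows "ext_invertible0 A C M N f"
proof -
  note SD = bip_D[OF bS] and TD = bip_D[OF bT]
  have Mo: "M \<in> Ob A" and No: "N \<in> Ob A" using M N C_ob by blast+
  have Po: "P \<in> Ob A" and Qo: "Q \<in> Ob A" using P Q proj_C C_ob by blast+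
  obtain k where k: "k \<in> H T S" "k \<cdot> h = I S" "h \<cdot> k = I T" using iso unfolding is_iso_def by blast
  define g where "g = p1 \<cdot> (k \<cdot> j1)"
  define b where "b = p2 \<cdot> (k \<cdot> j1)"
  define a where "a = p1 \<cdot> (k \<cdot> j2)"
  have kj1: "k \<cdot> j1 \<in> H N S" and kj2: "k \<cdot> j2 \<in> H P S" using k TD SD by blast+
  have gh: "g \<in> H N M" and bh: "b \<in> H N Q" and ah: "a \<in> H P M" unfolding g_def b_def a_def using kj1 kj2 SD TD by blast+
  have q1h: "q1 \<cdot> h \<in> H S N" and hi1: "h \<cdot> i1 \<in> H M T" and p1k: "p1 \<cdot> k \<in> H T M" using h TD SD k by blast+
  have fg: "f \<cdot> g \<oplus> g1 \<cdot> b = I N"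
  proof -
    have d: "q1 \<cdot> h = ((q1 \<cdot> h) \<cdot> i1) \<cdot> p1 \<oplus> ((q1 \<cdot> h) \<cdot> i2) \<cdot> p2" using bip_out_decomp[OF bS q1h No] .
    have "(q1 \<cdot> h) \<cdot> i1 = f" "(q1 \<cdot> h) \<cdot> i2 = g1" using e1 e2 assoc[OF SD(4) h TD(6)] assoc[OF SD(5) h TD(6)] SD TD by simp_all
    with d have d': "q1 \<cdot> h = f \<cdot> p1 \<oplus> g1 \<cdot> p2" by simp
    have "I N = q1 \<cdot> (h \<cdot> k) \<cdot> j1" using k TD by simp
    also have "\<dots> = (q1 \<cdot> h) \<cdot> (k \<cdot> j1)" using assoc[OF TD(4) k(1) h] assoc[OF kj1 h TD(6)] SD TD by simp
    also have "\<dots> = (f \<cdot> p1) \<cdot> (k \<cdot> j1) \<oplus> (g1 \<cdot> p2) \<cdot> (k \<cdot> j1)"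
      using d' distl[of "k \<cdot> j1" N S "f \<cdot> p1" N "g1 \<cdot> p2"] kj1 f g1 SD TD comp_h[OF SD(6) f] comp_h[OF SD(7) g1] Mo Qo by simp
    also have "\<dots> = f \<cdot> g \<oplus> g1 \<cdot> b" unfolding g_def b_def
      using assoc[OF kj1 SD(6) f] assoc[OF kj1 SD(7) g1] SD TD Mo Qo by simp
    finally show ?thesis by simp
  qed
  have gf: "g \<cdot> f \<oplus> a \<cdot> l = I M"
  proof -
    have d: "h \<cdot> i1 = j1 \<cdot> (q1 \<cdot> (h \<cdot> i1)) \<oplus> j2 \<cdot> (q2 \<cdot> (h \<cdot> i1))" using bip_in_decomp[OF bT hi1 Mo] .
    with e1 e3 have d': "h \<cdot> i1 = j1 \<cdot> f \<oplus> j2 \<cdot> l" by simp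
    have "I M = p1 \<cdot> (k \<cdot> h) \<cdot> i1" using k SD by simp
    also have "\<dots> = (p1 \<cdot> k) \<cdot> (h \<cdot> i1)" using assoc[OF SD(4) h k(1), symmetric] assoc[OF hi1 k(1) SD(6)] SD TD by simp
    also have "\<dots> = (p1 \<cdot> k) \<cdot> (j1 \<cdot> f) \<oplus> (p1 \<cdot> k) \<cdot> (j2 \<cdot> l)"
      using d' distr[of "j1 \<cdot> f" M T "j2 \<cdot> l" "p1 \<cdot> k" M] p1k f l SD TD comp_h[OF f TD(4)] comp_h[OF l TD(5)] Mo No Po by simp
    also have "\<dots> = g \<cdot> f \<oplus> a \<cdot> l" unfolding g_def a_def
      using assoc[OF f TD(4) p1k] assoc[OF l TD(5) p1k] assoc[OF TD(4) k(1) SD(6)] assoc[OF TD(5) k(1) SD(6)] SD TD Mo No Po by simp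
    finally show ?thesis by simp
  qed
  have fg': "f \<cdot> g = I N \<ominus> g1 \<cdot> b" using eq_sub[OF _ _ _ No No fg] f gh g1 bh Mo Qo No by blast
  show ?thesis unfolding ext_invertible0_def
  proof (intro ballI conjI allI impI; (elim conjE)?)
    fix X E' i' p' assume X: "X \<in> C" and cf: "conflation A C N E' X i' p'"
    note F = conf_D[OF cf]
    obtain E i p \<Phi> where c2: "conflation A C M E X i p" and \<Phi>: "\<Phi> \<in> H E' E" "\<Phi> \<cdot> i' = i \<cdot> g" "p \<cdot> \<Phi> = p'"
      and univ: "\<forall>W\<in>Ob A. \<forall>\<alpha>\<in>H E' W. \<forall>\<beta>\<in>H M W. \<alpha> \<cdot> i' = \<beta> \<cdot> g \<longrightarrow> (\<exists>\<phi>\<in>H E W. \<phi> \<cdot> \<Phi> = \<alpha> \<and> \<phi> \<cdot> i = \<beta>)"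
      and uniq: "\<forall>W\<in>Ob A. \<forall>\<phi>1\<in>H E W. \<forall>\<phi>2\<in>H E W. \<phi>1 \<cdot> \<Phi> = \<phi>2 \<cdot> \<Phi> \<and> \<phi>1 \<cdot> i = \<phi>2 \<cdot> i \<longrightarrow> \<phi>1 = \<phi>2"
      using pushout[OF cf gh M] by blast
    note G = conf_D[OF c2]
    obtain \<beta> where \<beta>: "\<beta> \<in> H E' Q" "\<beta> \<cdot> i' = b" using inj_ext[OF Q[unfolded proj_inj] cf bh] by blast
    have g1\<beta>: "g1 \<cdot> \<beta> \<in> H E' N" using g1 \<beta> Qo F by blast
    have ig\<beta>: "i' \<cdot> (g1 \<cdot> \<beta>) \<in> H E' E'" using g1\<beta> F by blast
    define \<alpha> where "\<alpha> = I E' \<ominus> i' \<cdot> (g1 \<cdot> \<beta>)"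
    have \<alpha>h: "\<alpha> \<in> H E' E'" unfolding \<alpha>_def using ig\<beta> F by simp
    have if': "i' \<cdot> f \<in> H M E'" using f F Mo by blast
    have "\<alpha> \<cdot> i' = i' \<ominus> (i' \<cdot> (g1 \<cdot> \<beta>)) \<cdot> i'" unfolding \<alpha>_def using distl_sub[OF F(7) _ ig\<beta>] F by simp
    also have "\<dots> = i' \<ominus> i' \<cdot> (g1 \<cdot> b)"
      using assoc[OF F(7) g1\<beta> F(7), symmetric] assoc[OF F(7) \<beta>(1) g1, symmetric] \<beta> F Qo by simp
    also have "\<dots> = i' \<cdot> (I N \<ominus> g1 \<cdot> b)" using distr_sub[OF _ comp_h[OF bh g1] F(7)] F Qo by simp
    also have "\<dots> = (i' \<cdot> f) \<cdot> g" using fg' assoc[OF gh f F(7)] F Mo by simp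
    finally have ai: "\<alpha> \<cdot> i' = (i' \<cdot> f) \<cdot> g" .
    obtain \<phi> where \<phi>: "\<phi> \<in> H E E'" "\<phi> \<cdot> \<Phi> = \<alpha>" "\<phi> \<cdot> i = i' \<cdot> f"
      using univ F(5) \<alpha>h if' ai by blast
    have p\<phi>: "p' \<cdot> \<phi> \<in> H E X" using \<phi> F G by blast
    have "(p' \<cdot> \<phi>) \<cdot> \<Phi> = p' \<cdot> \<alpha>" using assoc[OF \<Phi>(1) \<phi>(1) F(8)] \<phi> \<Phi> F G by simp
    also have "\<dots> = p' \<ominus> (p' \<cdot> i') \<cdot> (g1 \<cdot> \<beta>)" unfolding \<alpha>_def
      using distr_sub[OF _ ig\<beta> F(8)] assoc[OF g1\<beta> F(7) F(8)] F by simp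
    also have "\<dots> = p \<cdot> \<Phi>" using \<Phi> F g1\<beta> by simp
    finally have u1: "(p' \<cdot> \<phi>) \<cdot> \<Phi> = p \<cdot> \<Phi>" .
    have "(p' \<cdot> \<phi>) \<cdot> i = p' \<cdot> (i' \<cdot> f)" using assoc[OF G(7) \<phi>(1) F(8), symmetric] \<phi> F G by simp
    also have "\<dots> = Zr M X" using assoc[OF f F(7) F(8)] F Mo f by simp
    also have "\<dots> = p \<cdot> i" using G by simp
    finally have "(p' \<cdot> \<phi>) \<cdot> i = p \<cdot> i" .
    then have "p' \<cdot> \<phi> = p" using uniq G F u1 p\<phi> by blast
    then have "ext_push A f E i p E' i' p'" unfolding ext_push_def using \<phi> by blast
    then show "\<exists>E i p. conflation A C M E X i p \<and> ext_push A f E i p E' i' p'" using c2 by blast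
  next
    fix X E1 x1 y1 E2 x2 y2 F1 z1 w1 F2 z2 w2
    assume X: "X \<in> C" and c1: "conflation A C M E1 X x1 y1" and c2: "conflation A C M E2 X x2 y2"
      and d1: "conflation A C N F1 X z1 w1" and d2: "conflation A C N F2 X z2 w2"
      and ep1: "ext_push A f E1 x1 y1 F1 z1 w1" and ep2: "ext_push A f E2 x2 y2 F2 z2 w2"
      and ye: "yoneda_equiv A F1 X z1 w1 F2 z2 w2"
    note C1 = conf_D[OF c1] and C2 = conf_D[OF c2] and D1 = conf_D[OF d1] and D2 = conf_D[OF d2]
    obtain \<phi>1 where \<phi>1: "\<phi>1 \<in> H E1 F1" "\<phi>1 \<cdot> x1 = z1 \<cdot> f" "w1 \<cdot> \<phi>1 = y1" using ep1 unfolding ext_push_def by blast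
    obtain \<phi>2 where \<phi>2: "\<phi>2 \<in> H E2 F2" "\<phi>2 \<cdot> x2 = z2 \<cdot> f" "w2 \<cdot> \<phi>2 = y2" using ep2 unfolding ext_push_def by blast
    obtain \<theta> where \<theta>: "\<theta> \<in> H F1 F2" "\<theta> \<cdot> z1 = z2" "w2 \<cdot> \<theta> = w1" using ye unfolding yoneda_equiv_def by blast
    obtain G k2 pG \<Gamma> where cG: "conflation A C M G X k2 pG" and \<Gamma>: "\<Gamma> \<in> H F2 G" "\<Gamma> \<cdot> z2 = k2 \<cdot> g" "pG \<cdot> \<Gamma> = w2"
      using pushout[OF d2 gh M] by blast
    note GG = conf_D[OF cG]
    have gfh: "g \<cdot> f \<in> H M M" using gh f Mo No by blast
    have t1: "\<theta> \<cdot> \<phi>1 \<in> H E1 F2" using \<theta> \<phi>1 C1 D1 D2 by blast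
    have t2: "\<Gamma> \<cdot> (\<theta> \<cdot> \<phi>1) \<in> H E1 G" using t1 \<Gamma> C1 D2 GG by blast
    have t3: "\<Gamma> \<cdot> \<phi>2 \<in> H E2 G" using \<phi>2 \<Gamma> C2 D2 GG by blast
    have zf: "z1 \<cdot> f \<in> H M F1" "z2 \<cdot> f \<in> H M F2" using f D1 D2 Mo by blast+
    have "(\<Gamma> \<cdot> (\<theta> \<cdot> \<phi>1)) \<cdot> x1 = \<Gamma> \<cdot> (\<theta> \<cdot> (z1 \<cdot> f))"
      using assoc[OF C1(7) t1 \<Gamma>(1), symmetric] assoc[OF C1(7) \<phi>1(1) \<theta>(1), symmetric] \<phi>1 C1 D1 D2 GG by simp
    also have "\<dots> = (\<Gamma> \<cdot> z2) \<cdot> f"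
      using assoc[OF f D1(7) \<theta>(1)] assoc[OF f D2(7) \<Gamma>(1)] \<theta> D1 D2 GG Mo by simp
    also have "\<dots> = k2 \<cdot> (g \<cdot> f)" using \<Gamma> assoc[OF f gh GG(7)] GG Mo No by simp
    finally have s1: "(\<Gamma> \<cdot> (\<theta> \<cdot> \<phi>1)) \<cdot> x1 = k2 \<cdot> (g \<cdot> f)" .
    have "pG \<cdot> (\<Gamma> \<cdot> (\<theta> \<cdot> \<phi>1)) = y1"
      using assoc[OF t1 \<Gamma>(1) GG(8)] assoc[OF \<phi>1(1) \<theta>(1) D2(8)] \<Gamma> \<theta> \<phi>1 C1 D1 D2 GG by simp
    then obtain \<Psi>1 where \<Psi>1: "\<Psi>1 \<in> H E1 G" "\<Psi>1 \<cdot> x1 = k2" "pG \<cdot> \<Psi>1 = y1"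
      using adjust[OF c1 cG t2 s1 _ gfh P l ah gf] by blast
    have "(\<Gamma> \<cdot> \<phi>2) \<cdot> x2 = (\<Gamma> \<cdot> z2) \<cdot> f"
      using assoc[OF C2(7) \<phi>2(1) \<Gamma>(1), symmetric] assoc[OF f D2(7) \<Gamma>(1)] \<phi>2 C2 D2 GG Mo by simp
    also have "\<dots> = k2 \<cdot> (g \<cdot> f)" using \<Gamma> assoc[OF f gh GG(7)] GG Mo No by simp
    finally have s2: "(\<Gamma> \<cdot> \<phi>2) \<cdot> x2 = k2 \<cdot> (g \<cdot> f)" .
    have "pG \<cdot> (\<Gamma> \<cdot> \<phi>2) = y2" using assoc[OF \<phi>2(1) \<Gamma>(1) GG(8)] \<Gamma> \<phi>2 C2 D2 GG by simp
    then obtain \<Psi>2 where \<Psi>2: "\<Psi>2 \<in> H E2 G" "\<Psi>2 \<cdot> x2 = k2" "pG \<cdot> \<Psi>2 = y2"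
      using adjust[OF c2 cG t3 s2 _ gfh P l ah gf] by blast
    obtain \<Psi>' where \<Psi>': "\<Psi>' \<in> H G E2" "\<Psi>' \<cdot> k2 = x2" "y2 \<cdot> \<Psi>' = pG" using five[OF c2 cG \<Psi>2] by blast
    have "(\<Psi>' \<cdot> \<Psi>1) \<cdot> x1 = x2" using assoc[OF C1(7) \<Psi>1(1) \<Psi>'(1), symmetric] \<Psi>1 \<Psi>' C1 C2 GG by simp
    moreover have "y2 \<cdot> (\<Psi>' \<cdot> \<Psi>1) = y1" using assoc[OF \<Psi>1(1) \<Psi>'(1) C2(8)] \<Psi>1 \<Psi>' C1 C2 GG by simp
    moreover have "\<Psi>' \<cdot> \<Psi>1 \<in> H E1 E2" using \<Psi>1 \<Psi>' C1 C2 GG by blast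
    ultimately show "yoneda_equiv A E1 X x1 y1 E2 x2 y2" unfolding yoneda_equiv_def by blast
  qed
qed

end

context abcat begin

lemma add_right_comm: assumes "x \<in> H X Y" "y \<in> H X Y" "z \<in> H X Y" "X \<in> Ob A" "Y \<in> Ob A"
  shows "x \<oplus> y \<oplus> z = x \<oplus> z \<oplus> y"
  using assms add_assoc[of x X Y y z] add_assoc[of x X Y z y] add_comm[of y X Y z] by simp

lemma sub_add_sub: assumes "a \<in> H X Y" "b \<in> H X Y" "X \<in> Ob A" "Y \<in> Ob A"
  shows "(a \<ominus> b) \<oplus> (b \<ominus> a) = Zr X Y"
proof -
  have "(a \<ominus> b) \<oplus> (b \<ominus> a) = a \<oplus> (neg A b \<oplus> (b \<ominus> a))" using assms add_assoc[of a X Y "neg A b" "b \<ominus> a"] by simp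
  also have "neg A b \<oplus> (b \<ominus> a) = neg A a" using assms add_assoc[of "neg A b" X Y b "neg A a"] by simp
  finally show ?thesis using assms by simp
qed

end

context frob begin

lemma part2_only_if:
  assumes M: "M \<in> C" and N: "N \<in> C" and f: "f \<in> H M N" and inv: "ext_invertible0 A C M N f"
  shows "\<exists>P Q g1 l g2. proj_obj A C P \<and> proj_obj A C Q \<and>
              g1 \<in> H Q N \<and> l \<in> H M P \<and> g2 \<in> H Q P \<and>
              (\<exists>S i1 i2 p1 p2 T j1 j2 q1 q2 h.
                 is_biproduct A M Q S i1 i2 p1 p2 \<and>
                 is_biproduct A N P T j1 j2 q1 q2 \<and>
                 h \<in> H S T \<and>
                 q1 \<cdot> (h \<cdot> i1) = f \<and> q1 \<cdot> (h \<cdot> i2) = g1 \<and>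
                 q2 \<cdot> (h \<cdot> i1) = l \<and> q2 \<cdot> (h \<cdot> i2) = g2 \<and>
                 is_iso A S T h)"
proof -
  have Mo: "M \<in> Ob A" and No: "N \<in> Ob A" using M N C_ob by blast+
  have surj: "\<And>X E' i' p'. X \<in> C \<Longrightarrow> conflation A C N E' X i' p' \<Longrightarrow>
           (\<exists>E i p. conflation A C M E X i p \<and> ext_push A f E i p E' i' p')"
    using inv unfolding ext_invertible0_def by blast
  have injv: "\<And>X E1 i1 p1 E2 i2 p2 F1 j1 q1 F2 j2 q2. X \<in> C \<Longrightarrow>
           conflation A C M E1 X i1 p1 \<Longrightarrow> conflation A C M E2 X i2 p2 \<Longrightarrow>
           conflation A C N F1 X j1 q1 \<Longrightarrow> conflation A C N F2 X j2 q2 \<Longrightarrow>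
           ext_push A f E1 i1 p1 F1 j1 q1 \<Longrightarrow> ext_push A f E2 i2 p2 F2 j2 q2 \<Longrightarrow>
           yoneda_equiv A F1 X j1 q1 F2 j2 q2 \<Longrightarrow>
           yoneda_equiv A E1 X i1 p1 E2 i2 p2"
    using inv unfolding ext_invertible0_def by blast
  obtain J Z j q where cJ: "conflation A C N J Z j q" and Jinj: "inj_obj A C J" using enough_inj[OF N] by blast
  note CJ = conf_D[OF cJ]
  have JP: "proj_obj A C J" using Jinj proj_inj by blast
  obtain E i p where cE: "conflation A C M E Z i p" and ep: "ext_push A f E i p J j q"
    using surj[OF CJ(3) cJ] by blast
  note CE = conf_D[OF cE]
  obtain \<phi> where \<phi>: "\<phi> \<in> H E J" "\<phi> \<cdot> i = j \<cdot> f" "q \<cdot> \<phi> = p" using ep unfolding ext_push_def by blast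
  obtain lam where lam: "lam \<in> H J E" "p \<cdot> lam = q" using proj_lift[OF JP cE CJ(8)] by blast
  have lj: "lam \<cdot> j \<in> H N E" using lam CJ CE by blast
  have "p \<cdot> (lam \<cdot> j) = Zr N Z" using assoc[OF CJ(7) lam(1) CE(8)] lam CJ CE by simp
  then obtain g where g: "g \<in> H N M" "i \<cdot> g = lam \<cdot> j" using ker_fac[OF CE(10) lj CJ(4)] by blast
  have gfh: "g \<cdot> f \<in> H M M" and fgh: "f \<cdot> g \<in> H N N" using g f Mo No by blast+
  have \<psi>h: "\<phi> \<cdot> lam \<in> H J J" using \<phi> lam CJ CE by blast
  have x5: "\<phi> \<cdot> lam \<ominus> I J \<in> H J J" using \<psi>h CJ by simp
  have "q \<cdot> (\<phi> \<cdot> lam \<ominus> I J) = q \<cdot> (\<phi> \<cdot> lam) \<ominus> q" using distr_sub[OF \<psi>h _ CJ(8)] CJ by simp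
  also have "\<dots> = Zr J Z" using assoc[OF lam(1) \<phi>(1) CJ(8)] \<phi> lam CJ CE by simp
  finally obtain t where t: "t \<in> H J N" "j \<cdot> t = \<phi> \<cdot> lam \<ominus> I J" using ker_fac[OF CJ(10) x5 CJ(5)] by blast
  have "j \<cdot> (t \<cdot> j) = (\<phi> \<cdot> lam \<ominus> I J) \<cdot> j" using assoc[OF CJ(7) t(1) CJ(7)] t CJ by simp
  also have "\<dots> = (\<phi> \<cdot> lam) \<cdot> j \<ominus> j" using distl_sub[OF CJ(7) \<psi>h] CJ by simp
  also have "(\<phi> \<cdot> lam) \<cdot> j = j \<cdot> (f \<cdot> g)"
    using assoc[OF CJ(7) lam(1) \<phi>(1), symmetric] g(2)[symmetric] assoc[OF g(1) CE(7) \<phi>(1)] \<phi>(2)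
      assoc[OF g(1) f CJ(7), symmetric] CJ CE Mo by simp
  also have "j \<cdot> (f \<cdot> g) \<ominus> j = j \<cdot> (f \<cdot> g \<ominus> I N)" using distr_sub[OF fgh _ CJ(7)] CJ by simp
  finally have "t \<cdot> j = f \<cdot> g \<ominus> I N" using ker_mono[OF CJ(10) _ _ CJ(4)] t CJ fgh by simp
  note tj = this
  obtain I0 Y0 i0 p0 where cI: "conflation A C M I0 Y0 i0 p0" and I0inj: "inj_obj A C I0" using enough_inj[OF M] by blast
  note CI = conf_D[OF cI]
  obtain E2 i2 p2 \<chi> where cE2: "conflation A C M E2 Y0 i2 p2" and \<chi>: "\<chi> \<in> H I0 E2" "\<chi> \<cdot> i0 = i2 \<cdot> (g \<cdot> f)" "p2 \<cdot> \<chi> = p0"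
    using pushout[OF cI gfh M] by blast
  note CE2 = conf_D[OF cE2]
  obtain F2 j2 q2 \<Phi>2 where cF2: "conflation A C N F2 Y0 j2 q2" and \<Phi>2: "\<Phi>2 \<in> H E2 F2" "\<Phi>2 \<cdot> i2 = j2 \<cdot> f" "q2 \<cdot> \<Phi>2 = p2"
    using pushout[OF cE2 f N] by blast
  note CF2 = conf_D[OF cF2]
  have jf: "j \<cdot> f \<in> H M J" using f CJ Mo by blast
  obtain e where e: "e \<in> H I0 J" "e \<cdot> i0 = j \<cdot> f" using inj_ext[OF Jinj cI jf] by blast
  have te: "t \<cdot> e \<in> H I0 N" using t e CI CJ by blast
  have jte: "j2 \<cdot> (t \<cdot> e) \<in> H I0 F2" using te CF2 CI by blast
  have \<Phi>\<chi>: "\<Phi>2 \<cdot> \<chi> \<in> H I0 F2" using \<Phi>2 \<chi> CI CE2 CF2 by blast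
  define \<Phi>' where "\<Phi>' = \<Phi>2 \<cdot> \<chi> \<ominus> j2 \<cdot> (t \<cdot> e)"
  have \<Phi>'h: "\<Phi>' \<in> H I0 F2" unfolding \<Phi>'_def using \<Phi>\<chi> jte CI CF2 by simp
  define X0 where "X0 = f \<cdot> (g \<cdot> f)"
  have X0h: "X0 \<in> H M N" unfolding X0_def using gfh f Mo No by blast
  have a1: "(\<Phi>2 \<cdot> \<chi>) \<cdot> i0 = j2 \<cdot> X0" unfolding X0_def
    using assoc[OF CI(7) \<chi>(1) \<Phi>2(1), symmetric] \<chi>(2) assoc[OF gfh CE2(7) \<Phi>2(1)] \<Phi>2(2)
      assoc[OF gfh f CF2(7), symmetric] CI CE2 CF2 Mo by simp
  have "(t \<cdot> j) \<cdot> f = X0 \<ominus> f" unfolding X0_def using tj distl_sub[OF f fgh] assoc[OF f g(1) f] f Mo No by simp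
  then have a2: "(j2 \<cdot> (t \<cdot> e)) \<cdot> i0 = j2 \<cdot> (X0 \<ominus> f)"
    using assoc[OF CI(7) te CF2(7), symmetric] assoc[OF CI(7) e(1) t(1), symmetric] e(2)
      assoc[OF f CJ(7) t(1)] CI CJ CF2 Mo by simp
  have "\<Phi>' \<cdot> i0 = j2 \<cdot> X0 \<ominus> j2 \<cdot> (X0 \<ominus> f)" unfolding \<Phi>'_def using distl_sub[OF CI(7) \<Phi>\<chi> jte] a1 a2 CI CF2 by simp
  also have "\<dots> = j2 \<cdot> (X0 \<ominus> (X0 \<ominus> f))" using distr_sub[OF X0h _ CF2(7)] X0h f Mo No CF2 by simp
  also have "\<dots> = j2 \<cdot> f" using sub_sub_cancel[OF X0h f Mo No] by simp
  finally have \<Phi>'i: "\<Phi>' \<cdot> i0 = j2 \<cdot> f" .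
  have "q2 \<cdot> \<Phi>' = q2 \<cdot> (\<Phi>2 \<cdot> \<chi>) \<ominus> q2 \<cdot> (j2 \<cdot> (t \<cdot> e))" unfolding \<Phi>'_def using distr_sub[OF \<Phi>\<chi> jte CF2(8)] CI CF2 by simp
  also have "\<dots> = p0" using assoc[OF \<chi>(1) \<Phi>2(1) CF2(8)] assoc[OF te CF2(7) CF2(8)] \<Phi>2 \<chi> te CI CE2 CF2 No by simp
  finally have q\<Phi>': "q2 \<cdot> \<Phi>' = p0" .
  have "yoneda_equiv A I0 Y0 i0 p0 E2 i2 p2"
  proof (rule injv[OF CI(3) cI cE2 cF2 cF2])
    show "ext_push A f I0 i0 p0 F2 j2 q2" unfolding ext_push_def using \<Phi>'h \<Phi>'i q\<Phi>' by blast
    show "ext_push A f E2 i2 p2 F2 j2 q2" unfolding ext_push_def using \<Phi>2 by blast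
    show "yoneda_equiv A F2 Y0 j2 q2 F2 j2 q2" unfolding yoneda_equiv_def using CF2 by (intro bexI[of _ "I F2"]) auto
  qed
  then obtain \<psi>0 where \<psi>0: "\<psi>0 \<in> H I0 E2" "\<psi>0 \<cdot> i0 = i2" "p2 \<cdot> \<psi>0 = p0" unfolding yoneda_equiv_def by blast
  have x12: "\<chi> \<ominus> \<psi>0 \<in> H I0 E2" using \<chi> \<psi>0 CI CE2 by simp
  have "p2 \<cdot> (\<chi> \<ominus> \<psi>0) = Zr I0 Y0" using distr_sub[OF \<chi>(1) \<psi>0(1) CE2(8)] \<chi> \<psi>0 CI CE2 by simp
  then obtain u where u: "u \<in> H I0 M" "i2 \<cdot> u = \<chi> \<ominus> \<psi>0" using ker_fac[OF CE2(10) x12 CI(5)] by blast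
  have "i2 \<cdot> (u \<cdot> i0) = (\<chi> \<ominus> \<psi>0) \<cdot> i0" using assoc[OF CI(7) u(1) CE2(7)] u CI CE2 by simp
  also have "\<dots> = i2 \<cdot> (g \<cdot> f) \<ominus> i2" using distl_sub[OF CI(7) \<chi>(1) \<psi>0(1)] \<chi> \<psi>0 CI CE2 by simp
  also have "\<dots> = i2 \<cdot> (g \<cdot> f \<ominus> I M)" using distr_sub[OF gfh _ CE2(7)] CE2 by simp
  finally have ui: "u \<cdot> i0 = g \<cdot> f \<ominus> I M" using ker_mono[OF CE2(10) _ _ CE2(4)] u CI CE2 gfh by simp
  have l\<phi>: "lam \<cdot> \<phi> \<in> H E E" using lam \<phi> CE CJ by blast
  have x13: "I E \<ominus> lam \<cdot> \<phi> \<in> H E E" using l\<phi> CE by simp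
  have "p \<cdot> (I E \<ominus> lam \<cdot> \<phi>) = p \<ominus> p \<cdot> (lam \<cdot> \<phi>)" using distr_sub[OF _ l\<phi> CE(8)] CE by simp
  also have "\<dots> = Zr E Z" using assoc[OF \<phi>(1) lam(1) CE(8)] lam \<phi> CE CJ by simp
  finally obtain w where w: "w \<in> H E M" "i \<cdot> w = I E \<ominus> lam \<cdot> \<phi>" using ker_fac[OF CE(10) x13 CE(5)] by blast
  have "i \<cdot> (w \<cdot> i) = (I E \<ominus> lam \<cdot> \<phi>) \<cdot> i" using assoc[OF CE(7) w(1) CE(7)] w CE by simp
  also have "\<dots> = i \<ominus> (lam \<cdot> \<phi>) \<cdot> i" using distl_sub[OF CE(7) _ l\<phi>] CE by simp
  also have "(lam \<cdot> \<phi>) \<cdot> i = i \<cdot> (g \<cdot> f)"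
    using assoc[OF CE(7) \<phi>(1) lam(1), symmetric] \<phi>(2) assoc[OF f CJ(7) lam(1)] g(2)[symmetric]
      assoc[OF f g(1) CE(7), symmetric] CE CJ Mo by simp
  also have "i \<ominus> i \<cdot> (g \<cdot> f) = i \<cdot> (I M \<ominus> g \<cdot> f)" using distr_sub[OF _ gfh CE(7)] CE by simp
  finally have wi: "w \<cdot> i = I M \<ominus> g \<cdot> f" using ker_mono[OF CE(10) _ _ CE(4)] w CE gfh by simp
  obtain e' where e': "e' \<in> H E I0" "e' \<cdot> i = i0" using inj_ext[OF I0inj cE CI(7)] by blast
  have ue: "u \<cdot> e' \<in> H E M" using u e' CE CI by blast
  have x14: "w \<oplus> u \<cdot> e' \<in> H E M" using w ue CE by simp
  have "(w \<oplus> u \<cdot> e') \<cdot> i = w \<cdot> i \<oplus> (u \<cdot> e') \<cdot> i" using distl[OF CE(7) w(1) ue] CE by simp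
  also have "\<dots> = (I M \<ominus> g \<cdot> f) \<oplus> (g \<cdot> f \<ominus> I M)" using wi assoc[OF CE(7) e'(1) u(1), symmetric] e' ui CE CI by simp
  also have "\<dots> = Zr M M" using sub_add_sub[OF _ gfh] CE by simp
  finally obtain r where r: "r \<in> H Z M" "r \<cdot> p = w \<oplus> u \<cdot> e'" using coker_fac[OF CE(11) x14 CE(4)] by blast
  have rp: "r \<cdot> p \<in> H E M" using r CE by blast
  have wr: "w = r \<cdot> p \<ominus> u \<cdot> e'" using eq_sub[OF w(1) ue rp CE(5) CE(4)] r by simp
  have ir: "i \<cdot> r \<in> H Z E" and iu: "i \<cdot> u \<in> H I0 E" using r u CE CI by blast+
  have irq: "(i \<cdot> r) \<cdot> q \<in> H J E" using ir CJ CE by blast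
  have "i \<cdot> w = i \<cdot> (r \<cdot> p) \<ominus> i \<cdot> (u \<cdot> e')" using wr distr_sub[OF rp ue CE(7)] CE by simp
  also have "\<dots> = ((i \<cdot> r) \<cdot> q) \<cdot> \<phi> \<oplus> neg A (i \<cdot> u) \<cdot> e'"
    using assoc[OF CE(8) r(1) CE(7)] \<phi>(3)[symmetric] assoc[OF \<phi>(1) CJ(8) ir] assoc[OF e'(1) u(1) CE(7)]
      iu e' CE CJ CI by simp
  finally have iw: "i \<cdot> w = ((i \<cdot> r) \<cdot> q) \<cdot> \<phi> \<oplus> neg A (i \<cdot> u) \<cdot> e'" .
  have T1: "((i \<cdot> r) \<cdot> q) \<cdot> \<phi> \<in> H E E" "neg A (i \<cdot> u) \<cdot> e' \<in> H E E" using irq iu e' \<phi> CE CJ CI by blast+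
  have "I E = (I E \<ominus> lam \<cdot> \<phi>) \<oplus> lam \<cdot> \<phi>" using add_sub_cancel[OF _ l\<phi>] CE by simp
  also have "\<dots> = ((i \<cdot> r) \<cdot> q) \<cdot> \<phi> \<oplus> neg A (i \<cdot> u) \<cdot> e' \<oplus> lam \<cdot> \<phi>" using w(2)[symmetric] iw by simp
  also have "\<dots> = ((i \<cdot> r) \<cdot> q) \<cdot> \<phi> \<oplus> lam \<cdot> \<phi> \<oplus> neg A (i \<cdot> u) \<cdot> e'" using add_right_comm[OF T1 l\<phi>] CE by simp
  also have "\<dots> = ((i \<cdot> r) \<cdot> q \<oplus> lam) \<cdot> \<phi> \<oplus> neg A (i \<cdot> u) \<cdot> e'" using distl[OF \<phi>(1) irq lam(1)] CE CJ by simp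
  finally have idE: "I E = ((i \<cdot> r) \<cdot> q \<oplus> lam) \<cdot> \<phi> \<oplus> neg A (i \<cdot> u) \<cdot> e'" .
  have EP: "proj_obj A C E"
    by (rule retract_proj[OF CE(2) JP I0inj[folded proj_inj] _ \<phi>(1) _ e'(1) idE]) (use irq lam iu CE CJ CI in simp_all)
  have \<phi>l: "\<phi> \<cdot> lam \<in> H J J" using \<psi>h .
  have x15: "I J \<ominus> \<phi> \<cdot> lam \<in> H J J" using \<phi>l CJ by simp
  have "q \<cdot> (I J \<ominus> \<phi> \<cdot> lam) = q \<ominus> q \<cdot> (\<phi> \<cdot> lam)" using distr_sub[OF _ \<phi>l CJ(8)] CJ by simp
  also have "\<dots> = Zr J Z" using assoc[OF lam(1) \<phi>(1) CJ(8)] \<phi> lam CJ CE by simp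
  finally obtain s where s: "s \<in> H J N" "j \<cdot> s = I J \<ominus> \<phi> \<cdot> lam" using ker_fac[OF CJ(10) x15 CJ(5)] by blast
  obtain S ii1 ii2 pp1 pp2 where bS: "is_biproduct A M J S ii1 ii2 pp1 pp2" using bip_ex[OF Mo CJ(5)] by blast
  obtain T jj1 jj2 qq1 qq2 where bT: "is_biproduct A N E T jj1 jj2 qq1 qq2" using bip_ex[OF No CE(5)] by blast
  note SD = bip_D[OF bS] and TD = bip_D[OF bT]
  have ni: "neg A i \<in> H M E" using CE by simp
  define \<mu> where "\<mu> = jj1 \<cdot> f \<oplus> jj2 \<cdot> neg A i"
  define \<sigma> where "\<sigma> = jj1 \<cdot> s \<oplus> jj2 \<cdot> lam"
  define \<kappa> where "\<kappa> = j \<cdot> qq1 \<oplus> \<phi> \<cdot> qq2"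
  have \<mu>: "\<mu> \<in> H M T" "qq1 \<cdot> \<mu> = f" "qq2 \<cdot> \<mu> = neg A i" unfolding \<mu>_def using bip_pair[OF bT f ni Mo] by auto
  have \<sigma>: "\<sigma> \<in> H J T" "qq1 \<cdot> \<sigma> = s" "qq2 \<cdot> \<sigma> = lam" unfolding \<sigma>_def using bip_pair[OF bT s(1) lam(1) CJ(5)] by auto
  have \<kappa>: "\<kappa> \<in> H T J" "\<kappa> \<cdot> jj1 = j" "\<kappa> \<cdot> jj2 = \<phi>" unfolding \<kappa>_def using bip_copair[OF bT CJ(7) \<phi>(1) CJ(5)] by auto
  have \<kappa>\<mu>: "\<kappa> \<cdot> \<mu> = Zr M J"
  proof -
    have "\<kappa> \<cdot> \<mu> = \<kappa> \<cdot> (jj1 \<cdot> f) \<oplus> \<kappa> \<cdot> (jj2 \<cdot> neg A i)" unfolding \<mu>_def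
      using distr[OF comp_h[OF f TD(4)] comp_h[OF ni TD(5)] \<kappa>(1)] Mo No TD CE CJ by simp
    also have "\<dots> = j \<cdot> f \<ominus> \<phi> \<cdot> i" using assoc[OF f TD(4) \<kappa>(1)] assoc[OF ni TD(5) \<kappa>(1)] \<kappa> \<phi> ni Mo No TD CE CJ by simp
    also have "\<dots> = Zr M J" using \<phi> jf CJ Mo by simp
    finally show ?thesis .
  qed
  have \<kappa>\<sigma>: "\<kappa> \<cdot> \<sigma> = I J"
  proof -
    have "\<kappa> \<cdot> \<sigma> = \<kappa> \<cdot> (jj1 \<cdot> s) \<oplus> \<kappa> \<cdot> (jj2 \<cdot> lam)" unfolding \<sigma>_def
      using distr[OF comp_h[OF s(1) TD(4)] comp_h[OF lam(1) TD(5)] \<kappa>(1)] No TD CE CJ by simp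
    also have "\<dots> = j \<cdot> s \<oplus> \<phi> \<cdot> lam" using assoc[OF s(1) TD(4) \<kappa>(1)] assoc[OF lam(1) TD(5) \<kappa>(1)] \<kappa> No TD CE CJ by simp
    also have "\<dots> = I J" using s(2) add_sub_cancel[OF _ \<phi>l] CJ by simp
    finally show ?thesis .
  qed
  have \<mu>mono: "a = b" if ab: "a \<in> H W M" "b \<in> H W M" "W \<in> Ob A" "\<mu> \<cdot> a = \<mu> \<cdot> b" for W a b
  proof -
    have "neg A (i \<cdot> a) = neg A (i \<cdot> b)"
      using ab assoc[OF ab(1) \<mu>(1) TD(7)] assoc[OF ab(2) \<mu>(1) TD(7)] \<mu> CE TD by simp
    then have "i \<cdot> a = i \<cdot> b" using ab CE by (metis comp_h neg_neg)
    then show ?thesis using ker_mono[OF CE(10) ab(1,2,3)] by blast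
  qed
  have \<sigma>\<kappa>: "\<sigma> \<cdot> \<kappa> \<in> H T T" using \<sigma> \<kappa> CJ TD by blast
  have xT: "I T \<ominus> \<sigma> \<cdot> \<kappa> \<in> H T T" using \<sigma>\<kappa> TD by simp
  have "\<kappa> \<cdot> (I T \<ominus> \<sigma> \<cdot> \<kappa>) = \<kappa> \<ominus> (\<kappa> \<cdot> \<sigma>) \<cdot> \<kappa>" using distr_sub[OF _ \<sigma>\<kappa> \<kappa>(1)] assoc[OF \<kappa>(1) \<sigma>(1) \<kappa>(1)] TD CJ \<kappa>(1) by simp
  then have \<kappa>x: "\<kappa> \<cdot> (I T \<ominus> \<sigma> \<cdot> \<kappa>) = Zr T J" using \<kappa>\<sigma> \<kappa> TD CJ by simp
  obtain \<rho> where \<rho>: "\<rho> \<in> H T M" "\<mu> \<cdot> \<rho> = I T \<ominus> \<sigma> \<cdot> \<kappa>"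
  proof -
    define x where "x = I T \<ominus> \<sigma> \<cdot> \<kappa>"
    have xh: "x \<in> H T T" unfolding x_def using xT .
    have q1x: "qq1 \<cdot> x \<in> H T N" and q2x: "qq2 \<cdot> x \<in> H T E" using xh TD by blast+
    have kx: "\<kappa> \<cdot> x = j \<cdot> (qq1 \<cdot> x) \<oplus> \<phi> \<cdot> (qq2 \<cdot> x)" unfolding \<kappa>_def
      using distl[OF xh comp_h[OF TD(6) CJ(7)] comp_h[OF TD(7) \<phi>(1)]] assoc[OF xh TD(6) CJ(7)] assoc[OF xh TD(7) \<phi>(1)]
        TD CJ CE by simp
    have "q \<cdot> (\<kappa> \<cdot> x) = (q \<cdot> j) \<cdot> (qq1 \<cdot> x) \<oplus> (q \<cdot> \<phi>) \<cdot> (qq2 \<cdot> x)"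
      using kx distr[OF comp_h[OF q1x CJ(7)] comp_h[OF q2x \<phi>(1)] CJ(8)] assoc[OF q1x CJ(7) CJ(8)] assoc[OF q2x \<phi>(1) CJ(8)]
        TD CJ CE by simp
    then have "p \<cdot> (qq2 \<cdot> x) = Zr T Z" using \<kappa>x x_def \<phi> q1x q2x TD CJ CE by simp
    then obtain m0 where m0: "m0 \<in> H T M" "i \<cdot> m0 = qq2 \<cdot> x" using ker_fac[OF CE(10) q2x TD(3)] by blast
    have fm: "f \<cdot> m0 \<in> H T N" using f m0 Mo No TD by blast
    have "\<phi> \<cdot> (qq2 \<cdot> x) = j \<cdot> (f \<cdot> m0)" using m0(2)[symmetric] assoc[OF m0(1) CE(7) \<phi>(1)] \<phi>(2) assoc[OF m0(1) f CJ(7)]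
      Mo No TD CE CJ by simp
    then have "j \<cdot> (qq1 \<cdot> x \<oplus> f \<cdot> m0) = Zr T J" using kx \<kappa>x x_def distr[OF q1x fm CJ(7)] TD CJ by simp
    then have "j \<cdot> (qq1 \<cdot> x \<oplus> f \<cdot> m0) = j \<cdot> Zr T N" using CJ TD by simp
    then have "qq1 \<cdot> x \<oplus> f \<cdot> m0 = Zr T N" using ker_mono[OF CJ(10) _ _ TD(3)] q1x fm TD CJ by simp
    then have q1xe: "qq1 \<cdot> x = neg A (f \<cdot> m0)" using neg_unique[OF fm q1x TD(3) CJ(4)] add_comm[OF q1x fm TD(3) CJ(4)] by simp
    have nm: "neg A m0 \<in> H T M" using m0 TD Mo by simp
    have \<mu>nm: "\<mu> \<cdot> neg A m0 \<in> H T T" using nm \<mu> TD Mo by blast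
    have "qq1 \<cdot> (\<mu> \<cdot> neg A m0) = qq1 \<cdot> x" using assoc[OF nm \<mu>(1) TD(6)] \<mu> q1xe m0 f Mo No TD by simp
    moreover have "qq2 \<cdot> (\<mu> \<cdot> neg A m0) = qq2 \<cdot> x"
    proof -
      have "qq2 \<cdot> (\<mu> \<cdot> neg A m0) = (qq2 \<cdot> \<mu>) \<cdot> neg A m0" using assoc[OF nm \<mu>(1) TD(7)] TD Mo by simp
      also have "\<dots> = neg A i \<cdot> neg A m0" using \<mu> by simp
      also have "\<dots> = neg A (i \<cdot> neg A m0)" using neg_cmp[OF nm CE(7)] TD CE by simp
      also have "\<dots> = i \<cdot> m0" using cmp_neg[OF m0(1) CE(7)] neg_neg[OF comp_h[OF m0(1) CE(7)]] TD CE by simp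
      finally show ?thesis using m0 by simp
    qed
    ultimately have "\<mu> \<cdot> neg A m0 = x" using bip_in_ext[OF bT \<mu>nm xh TD(3)] by blast
    then show ?thesis using that nm x_def by blast
  qed
  have \<rho>\<mu>: "\<rho> \<cdot> \<mu> = I M"
  proof -
    have "\<mu> \<cdot> (\<rho> \<cdot> \<mu>) = (I T \<ominus> \<sigma> \<cdot> \<kappa>) \<cdot> \<mu>" using assoc[OF \<mu>(1) \<rho>(1) \<mu>(1)] \<rho> TD Mo by simp
    also have "\<dots> = \<mu> \<ominus> \<sigma> \<cdot> (\<kappa> \<cdot> \<mu>)" using distl_sub[OF \<mu>(1) _ \<sigma>\<kappa>] assoc[OF \<mu>(1) \<kappa>(1) \<sigma>(1)] TD Mo CJ \<mu>(1) by simp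
    also have "\<dots> = \<mu> \<cdot> I M" using \<kappa>\<mu> \<sigma> \<mu> TD Mo CJ by simp
    finally show ?thesis using \<mu>mono[OF _ _ Mo] comp_h[OF \<mu>(1) \<rho>(1)] TD Mo by simp
  qed
  have \<rho>\<sigma>: "\<rho> \<cdot> \<sigma> = Zr J M"
  proof -
    have "\<mu> \<cdot> (\<rho> \<cdot> \<sigma>) = (I T \<ominus> \<sigma> \<cdot> \<kappa>) \<cdot> \<sigma>" using assoc[OF \<sigma>(1) \<rho>(1) \<mu>(1)] \<rho> TD Mo CJ by simp
    also have "\<dots> = \<sigma> \<ominus> \<sigma> \<cdot> (\<kappa> \<cdot> \<sigma>)" using distl_sub[OF \<sigma>(1) _ \<sigma>\<kappa>] assoc[OF \<sigma>(1) \<kappa>(1) \<sigma>(1)] TD CJ \<sigma>(1) by simp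
    also have "\<dots> = \<mu> \<cdot> Zr J M" using \<kappa>\<sigma> \<sigma> \<mu> TD Mo CJ by simp
    finally show ?thesis using \<mu>mono[OF _ _ CJ(5)] comp_h[OF \<sigma>(1) \<rho>(1)] TD Mo CJ by simp
  qed
  define h where "h = \<mu> \<cdot> pp1 \<oplus> \<sigma> \<cdot> pp2"
  define k where "k = ii1 \<cdot> \<rho> \<oplus> ii2 \<cdot> \<kappa>"
  have h: "h \<in> H S T" "h \<cdot> ii1 = \<mu>" "h \<cdot> ii2 = \<sigma>" unfolding h_def using bip_copair[OF bS \<mu>(1) \<sigma>(1) TD(3)] by auto
  have k: "k \<in> H T S" "pp1 \<cdot> k = \<rho>" "pp2 \<cdot> k = \<kappa>" unfolding k_def using bip_pair[OF bS \<rho>(1) \<kappa>(1) TD(3)] by auto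
  have kh: "k \<cdot> h \<in> H S S" using k h SD TD by blast
  have k\<mu>: "k \<cdot> \<mu> = ii1"
    using bip_in_ext[OF bS comp_h[OF \<mu>(1) k(1)] SD(4) Mo] assoc[OF \<mu>(1) k(1) SD(6)] assoc[OF \<mu>(1) k(1) SD(7)]
      k \<rho>\<mu> \<kappa>\<mu> SD TD Mo by simp
  have k\<sigma>: "k \<cdot> \<sigma> = ii2"
    using bip_in_ext[OF bS comp_h[OF \<sigma>(1) k(1)] SD(5) CJ(5)] assoc[OF \<sigma>(1) k(1) SD(6)] assoc[OF \<sigma>(1) k(1) SD(7)]
      k \<rho>\<sigma> \<kappa>\<sigma> SD TD CJ by simp
  have "k \<cdot> h = I S"
    using bip_out_ext[OF bS kh id_h[OF SD(3)] SD(3)] assoc[OF SD(4) h(1) k(1), symmetric] assoc[OF SD(5) h(1) k(1), symmetric]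
      h k\<mu> k\<sigma> SD TD by simp
  moreover have "h \<cdot> k = I T"
  proof -
    have "h \<cdot> k = h \<cdot> (ii1 \<cdot> \<rho>) \<oplus> h \<cdot> (ii2 \<cdot> \<kappa>)" unfolding k_def
      using distr[OF comp_h[OF \<rho>(1) SD(4)] comp_h[OF \<kappa>(1) SD(5)] h(1)] SD TD by simp
    also have "\<dots> = \<mu> \<cdot> \<rho> \<oplus> \<sigma> \<cdot> \<kappa>" using assoc[OF \<rho>(1) SD(4) h(1)] assoc[OF \<kappa>(1) SD(5) h(1)] h SD TD CJ Mo by simp
    also have "\<dots> = I T" using \<rho>(2) add_sub_cancel[OF _ \<sigma>\<kappa>] TD by simp
    finally show ?thesis .
  qed
  ultimately have iso: "is_iso A S T h" unfolding is_iso_def using h k by blast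
  have comps: "qq1 \<cdot> (h \<cdot> ii1) = f" "qq1 \<cdot> (h \<cdot> ii2) = s" "qq2 \<cdot> (h \<cdot> ii1) = neg A i" "qq2 \<cdot> (h \<cdot> ii2) = lam"
    using h \<mu> \<sigma> by simp_all
  show ?thesis
    apply (rule exI[of _ E], rule exI[of _ J], rule exI[of _ s], rule exI[of _ "neg A i"], rule exI[of _ lam])
    using EP JP s(1) ni lam(1) bS bT h(1) comps iso by blast
qed

end

theorem proposition3p8:
  fixes A :: "('o, 'm) cat" and C :: "'o set"
    and M N :: 'o and f :: 'm
  assumes "abelian A"
    and "ext_closed_additive A C"
    and "frobenius A C"
    and "M \<in> C" and "N \<in> C" and "f \<in> Hom A M N"
  shows "(ext_phantom0 A C M N f \<longleftrightarrow> factors_through_proj A C M N f) \<and>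
         (ext_invertible0 A C M N f \<longleftrightarrow>
           (\<exists>P Q g1 l g2. proj_obj A C P \<and> proj_obj A C Q \<and>
              g1 \<in> Hom A Q N \<and> l \<in> Hom A M P \<and> g2 \<in> Hom A Q P \<and>
              (\<exists>S i1 i2 p1 p2 T j1 j2 q1 q2 h.
                 is_biproduct A M Q S i1 i2 p1 p2 \<and>
                 is_biproduct A N P T j1 j2 q1 q2 \<and>
                 h \<in> Hom A S T \<and>
                 cmp A q1 (cmp A h i1) = f \<and> cmp A q1 (cmp A h i2) = g1 \<and>
                 cmp A q2 (cmp A h i1) = l \<and> cmp A q2 (cmp A h i2) = g2 \<and>
                 is_iso A S T h)))"
  proof -
  interpret F: frob A C
    unfolding frob_def abcat_def frob_axioms_def using assms(1-3) by blast
  have 1: "ext_phantom0 A C M N f \<longleftrightarrow> factors_through_proj A C M N f"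
    using F.part1_if[OF assms(4-6)] F.part1_only_if[OF assms(4-6)] by blast
  have 2: "ext_invertible0 A C M N f \<longleftrightarrow>
           (\<exists>P Q g1 l g2. proj_obj A C P \<and> proj_obj A C Q \<and>
              g1 \<in> Hom A Q N \<and> l \<in> Hom A M P \<and> g2 \<in> Hom A Q P \<and>
              (\<exists>S i1 i2 p1 p2 T j1 j2 q1 q2 h.
                 is_biproduct A M Q S i1 i2 p1 p2 \<and>
                 is_biproduct A N P T j1 j2 q1 q2 \<and>
                 h \<in> Hom A S T \<and>
                 cmp A q1 (cmp A h i1) = f \<and> cmp A q1 (cmp A h i2) = g1 \<and>
                 cmp A q2 (cmp A h i1) = l \<and> cmp A q2 (cmp A h i2) = g2 \<and>
                 is_iso A S T h))" (is "?L \<longleftrightarrow> ?R")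
  proof
    assume ?L
    then show ?R using F.part2_only_if[OF assms(4-6)] by blast
  next
    assume ?R
    then obtain P Q g1 l g2 S i1 i2 p1 p2 T j1 j2 q1 q2 h where
      H: "proj_obj A C P" "proj_obj A C Q" "g1 \<in> Hom A Q N" "l \<in> Hom A M P" "g2 \<in> Hom A Q P"
         "is_biproduct A M Q S i1 i2 p1 p2" "is_biproduct A N P T j1 j2 q1 q2" "h \<in> Hom A S T"
         "cmp A q1 (cmp A h i1) = f" "cmp A q1 (cmp A h i2) = g1"
         "cmp A q2 (cmp A h i1) = l" "cmp A q2 (cmp A h i2) = g2" "is_iso A S T h"
      by blast
    show ?L by (rule F.part2_if[OF assms(4-6) H])
  qed
  show ?thesis using 1 2 by blast
qed

end
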